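(* For $k=0,1,2,\dots$ consider $\dot x(t)=A(u^k(t))x(t)+Cu^k(t)+d$, where $u^k$ is a $\tau_k$-periodic control with values in $\Omega$, $\tau_k\to\tau_0>0$, $u^k\to u^0$ in $L^1([0,\tau_0+1],\mathbb R^m)$, and $\|u^k\|_\infty\le c$ for some $c>0$. Assume (i) $1\in\mathrm{spec}(\Phi_{u^0}(\tau_0,0))$ and $1\notin\mathrm{spec}(\Phi_{u^k}(\tau_k,0))$ for $k\ge1$, and (ii) $\int_0^{\tau_0}\Phi_{u^0}(\tau_0,s)(Cu^0(s)+d)ds\notin\mathrm{Im}(I-\Phi_{u^0}(\tau_0,0))$. Then for each $k\ge1$ there is a unique $\tau_k$-periodic solution for $u^k$, and its initial value $x^k$ satisfies $\|x^k\|\to\infty$ and $d\big(x^k/\|x^k\|,\ker(I-\Phi_{u^0}(\tau_0,0))\big)\to0$ as $k\to\infty$, where $\ker(I-\Phi_{u^0}(\tau_0,0))=\mathbf E(\Phi_{u^0}(\tau_0,0);1)$.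
   Context: $A,B_1,\dots,B_m\in\mathbb R^{n\times n}$, $c_i,d\in\mathbb R^n$, $A(u)=A+\sum_iu_iB_i$, $C=(c_1,\dots,c_m)$, $\Omega\subset\mathbb R^m$ bounded. $\Phi_u(t,s)$ is the principal fundamental solution of $\dot x=A(u(t))x$. $\mathbf E(M;1)$ denotes the real eigenspace of $M$ for eigenvalue $1$; $d(x,Y)$ is the distance from $x$ to the set $Y$. *)

theory Defs
  imports "HOL-Analysis.Analysis"
begin

text \<open>A(u) = A + sum_i u_i B_i\<close>
definition Amat :: "real^'n^'n \<Rightarrow> ('m::finite \<Rightarrow> real^'n^'n) \<Rightarrow> real^'m \<Rightarrow> real^'n^'n" where
  "Amat A B w = A + (\<Sum>i\<in>UNIV. (w $ i) *\<^sub>R B i)"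

text \<open>Principal fundamental solution Phi_u(t,s) (for t \<ge> s) of the linear system
  x' = A(u(t)) x, in the Caratheodory (integral-equation) sense.\<close>
definition fundsol :: "real^'n^'n \<Rightarrow> ('m::finite \<Rightarrow> real^'n^'n) \<Rightarrow> (real \<Rightarrow> real^'m)
    \<Rightarrow> real \<Rightarrow> real \<Rightarrow> real^'n^'n" where
  "fundsol A B u t s = (THE M. \<exists>\<Phi>. \<Phi> s = mat 1 \<and>
      (\<forall>a b. s \<le> a \<longrightarrow> a \<le> b \<longrightarrow>
         ((\<lambda>r. Amat A B (u r) ** \<Phi> r) has_integral (\<Phi> b - \<Phi> a)) {a..b}) \<and>
      \<Phi> t = M)"

text \<open>Caratheodory solution on the whole real line of x' = A(u)x + Cu + d.\<close>
definition is_solution :: "real^'n^'n \<Rightarrow> ('m::finite \<Rightarrow> real^'n^'n) \<Rightarrow> real^'m^'n \<Rightarrow> real^'n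
    \<Rightarrow> (real \<Rightarrow> real^'m) \<Rightarrow> (real \<Rightarrow> real^'n) \<Rightarrow> bool" where
  "is_solution A B C d u x \<longleftrightarrow>
     (\<forall>a b. a \<le> b \<longrightarrow>
        ((\<lambda>r. Amat A B (u r) *v x r + C *v u r + d) has_integral (x b - x a)) {a..b})"

definition is_periodic_solution :: "real^'n^'n \<Rightarrow> ('m::finite \<Rightarrow> real^'n^'n) \<Rightarrow> real^'m^'n \<Rightarrow> real^'n
    \<Rightarrow> (real \<Rightarrow> real^'m) \<Rightarrow> real \<Rightarrow> (real \<Rightarrow> real^'n) \<Rightarrow> bool" where
  "is_periodic_solution A B C d u \<tau> x \<longleftrightarrow>
     is_solution A B C d u x \<and> (\<forall>t. x (t + \<tau>) = x t)"

text \<open>1 belongs to the spectrum of a real matrix M (equivalently: M has the real eigenvalue 1).\<close>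
definition one_in_spec :: "real^'n^'n \<Rightarrow> bool" where
  "one_in_spec M \<longleftrightarrow> (\<exists>v. v \<noteq> 0 \<and> M *v v = v)"

text \<open>Real eigenspace E(M; lambda).\<close>
definition eigenspace_real :: "real^'n^'n \<Rightarrow> real \<Rightarrow> (real^'n) set" where
  "eigenspace_real M lam = {v. M *v v = lam *\<^sub>R v}"

end

theory Submission
  imports Defs
begin

(* ---- G ---- *)

lemma poly_has_integral:
  fixes s t :: real assumes "s \<le> t"
  shows "((\<lambda>r. (r - s) ^ j) has_integral ((t - s) ^ Suc j / Suc j)) {s..t}"
proof -
  have "((\<lambda>r. (r - s) ^ j) has_integral ((\<lambda>r. (r - s) ^ Suc j / Suc j) t - (\<lambda>r. (r - s) ^ Suc j / Suc j) s)) {s..t}"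
    apply (rule fundamental_theorem_of_calculus[OF assms])
    apply (auto intro!: derivative_eq_intros simp: has_real_derivative_iff_has_vector_derivative[symmetric])
    apply (cases j)
     apply (auto simp: field_simps)
    done
  then show ?thesis by simp
qed

lemma exp_sum_le:
  fixes x :: real assumes "0 \<le> x"
  shows "(\<Sum>j<n. x ^ j / fact j) \<le> exp x"
proof -
  have "(\<lambda>j. x ^ j /\<^sub>R fact j) sums exp x" by (rule exp_converges)
  then have s: "(\<lambda>j. x ^ j / fact j) sums exp x" by (simp add: divide_inverse_commute)
  show ?thesis
    using sum_le_suminf[OF sums_summable[OF s], of "{..<n}"] sums_unique[OF s] assms by auto
qed

lemma pow_fact_lim:
  fixes x :: real
  shows "(\<lambda>n. x ^ n / fact n) \<longlonglongrightarrow> 0"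
proof -
  have "(\<lambda>j. x ^ j /\<^sub>R fact j) sums exp x" by (rule exp_converges)
  then have s: "(\<lambda>j. x ^ j / fact j) sums exp x" by (simp add: divide_inverse_commute)
  from summable_LIMSEQ_zero[OF sums_summable[OF s]] show ?thesis .
qed

lemma gronwall:
  fixes \<phi> :: "real \<Rightarrow> real"
  assumes cont: "continuous_on {s..T} \<phi>"
    and ineq: "\<And>t. t \<in> {s..T} \<Longrightarrow> \<phi> t \<le> \<epsilon> + K * integral {s..t} \<phi>"
    and nn: "\<And>t. t \<in> {s..T} \<Longrightarrow> 0 \<le> \<phi> t"
    and K: "0 \<le> K" and e: "0 \<le> \<epsilon>"
    and t: "t \<in> {s..T}"
  shows "\<phi> t \<le> \<epsilon> * exp (K * (t - s))"
proof -
  obtain B where B: "\<And>t. t \<in> {s..T} \<Longrightarrow> \<phi> t \<le> B"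
    using compact_attains_sup[OF compact_continuous_image[OF cont compact_Icc]]
    by (metis atLeastAtMost_iff atLeastatMost_empty' empty_iff image_eqI image_is_empty nle_le)
  have B0: "0 \<le> B" using B nn t by (meson order_trans)
  have main: "\<forall>t\<in>{s..T}. \<phi> t \<le> \<epsilon> * (\<Sum>j<n. (K * (t - s)) ^ j / fact j) + B * (K * (t - s)) ^ n / fact n" for n
  proof (induction n)
    case 0
    then show ?case using B by simp
  next
    case (Suc n)
    show ?case
    proof
      fix t assume t: "t \<in> {s..T}"
      let ?g = "\<lambda>r. (\<Sum>j<n. (\<epsilon> * K ^ j / fact j) * (r - s) ^ j) + (B * K ^ n / fact n) * (r - s) ^ n"
      have gi: "(?g has_integral ((\<Sum>j<n. (\<epsilon> * K ^ j / fact j) * ((t - s) ^ Suc j / Suc j)) + (B * K ^ n / fact n) * ((t - s) ^ Suc n / Suc n))) {s..t}"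
        using t by (intro has_integral_add has_integral_sum has_integral_mult_right poly_has_integral) auto
      have int_phi: "\<phi> integrable_on {s..t}"
        using t by (intro integrable_continuous_interval continuous_on_subset[OF cont]) auto
      have "integral {s..t} \<phi> \<le> integral {s..t} ?g"
      proof (rule integral_le[OF int_phi])
        show "?g integrable_on {s..t}" using gi by blast
        fix r assume r: "r \<in> {s..t}"
        then have "r \<in> {s..T}" using t by auto
        with Suc.IH have "\<phi> r \<le> \<epsilon> * (\<Sum>j<n. (K * (r - s)) ^ j / fact j) + B * (K * (r - s)) ^ n / fact n" by blast
        also have "\<dots> = ?g r"
          by (simp add: sum_distrib_left power_mult_distrib mult.assoc)
        finally show "\<phi> r \<le> ?g r" .
      qed
      also have "\<dots> = (\<Sum>j<n. (\<epsilon> * K ^ j / fact j) * ((t - s) ^ Suc j / Suc j)) + (B * K ^ n / fact n) * ((t - s) ^ Suc n / Suc n)"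
        using gi by (rule integral_unique)
      finally have "\<phi> t \<le> \<epsilon> + K * ((\<Sum>j<n. (\<epsilon> * K ^ j / fact j) * ((t - s) ^ Suc j / Suc j)) + (B * K ^ n / fact n) * ((t - s) ^ Suc n / Suc n))"
        using ineq[OF t] K by (meson add_left_mono mult_left_mono order_trans)
      also have "\<dots> = \<epsilon> * (\<Sum>j<Suc n. (K * (t - s)) ^ j / fact j) + B * (K * (t - s)) ^ Suc n / fact (Suc n)"
        apply (simp only: sum.lessThan_Suc_shift power_mult_distrib)
        apply (simp add: sum_distrib_left distrib_left mult.assoc)
        apply (simp add: algebra_simps)
        done
      finally show "\<phi> t \<le> \<epsilon> * (\<Sum>j<Suc n. (K * (t - s)) ^ j / fact j) + B * (K * (t - s)) ^ Suc n / fact (Suc n)" .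
    qed
  qed
  define x where "x = K * (t - s)"
  have x0: "0 \<le> x" using K t by (simp add: x_def)
  have le: "\<phi> t - \<epsilon> * exp x \<le> B * (x ^ n / fact n)" for n
  proof -
    have "\<phi> t \<le> \<epsilon> * (\<Sum>j<n. x ^ j / fact j) + B * x ^ n / fact n" using main t x_def by blast
    also have "\<epsilon> * (\<Sum>j<n. x ^ j / fact j) \<le> \<epsilon> * exp x"
      using exp_sum_le[OF x0] e by (rule mult_left_mono)
    finally show ?thesis by simp
  qed
  have "(\<lambda>n. B * (x ^ n / fact n)) \<longlonglongrightarrow> B * 0"
    by (intro tendsto_mult tendsto_const pow_fact_lim)
  then have "\<phi> t - \<epsilon> * exp x \<le> 0"
    using le by (intro LIMSEQ_le_const[where X="\<lambda>n. B * (x ^ n / fact n)"]) auto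
  then show ?thesis by (simp add: x_def)
qed


(* ---- L ---- *)

definition solfrom :: "('m::euclidean_space \<Rightarrow> 'a::euclidean_space \<Rightarrow> 'a) \<Rightarrow> (real \<Rightarrow> 'm) \<Rightarrow> (real \<Rightarrow> 'a) \<Rightarrow> real \<Rightarrow> (real \<Rightarrow> 'a) \<Rightarrow> bool" where
  "solfrom p M g s X \<longleftrightarrow> (\<forall>a b. s \<le> a \<longrightarrow> a \<le> b \<longrightarrow> ((\<lambda>r. p (M r) (X r) + g r) has_integral (X b - X a)) {a..b})"

lemma solfrom_mono: "solfrom p M g s X \<Longrightarrow> s \<le> s' \<Longrightarrow> solfrom p M g s' X"
  unfolding solfrom_def by auto

lemma integrable_bdd_borel:
  fixes f :: "real \<Rightarrow> 'a::euclidean_space"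
  assumes "f \<in> borel_measurable borel" "\<And>r. r \<in> {a..b} \<Longrightarrow> norm (f r) \<le> B"
  shows "f integrable_on {a..b}"
proof -
  have "f \<in> borel_measurable lebesgue"
    using assms(1) measurable_completion measurable_lborel2 by blast
  then show ?thesis
    using measurable_bounded_lemma[of f "\<lambda>_. B" a b] assms(2)
    by (simp add: integrable_continuous_interval)
qed

lemma clamp_ext:
  fixes Y :: "real \<Rightarrow> 'a::topological_space"
  assumes "continuous_on {a..b} Y" "a \<le> b"
  shows "continuous_on UNIV (\<lambda>r. Y (max a (min b r))) \<and> (\<forall>r\<in>{a..b}. Y (max a (min b r)) = Y r)"
proof
  show "continuous_on UNIV (\<lambda>r. Y (max a (min b r)))"
    by (rule continuous_on_compose2[OF assms(1)]) (use assms(2) in \<open>auto intro!: continuous_intros\<close>)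
qed auto

lemma bounded_on_Icc:
  fixes Y :: "real \<Rightarrow> 'a::real_normed_vector"
  assumes "continuous_on {a..b} Y"
  obtains B where "\<And>r. r \<in> {a..b} \<Longrightarrow> norm (Y r) \<le> B"
proof -
  have "bounded (Y ` {a..b})" by (rule compact_imp_bounded[OF compact_continuous_image[OF assms compact_Icc]])
  then obtain B where "\<forall>x\<in>Y ` {a..b}. norm x \<le> B" by (auto simp: bounded_iff)
  then show ?thesis by (intro that[of B]) auto
qed

locale lode =
  fixes p :: "'m::euclidean_space \<Rightarrow> 'a::euclidean_space \<Rightarrow> 'a" and M :: "real \<Rightarrow> 'm"
    and g :: "real \<Rightarrow> 'a" and K Gb :: real
  assumes bb: "bounded_bilinear p"
    and M_meas: "M \<in> borel_measurable borel" and g_meas: "g \<in> borel_measurable borel"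
    and Kb: "\<And>r x. norm (p (M r) x) \<le> K * norm x" and K0: "0 \<le> K"
    and gb: "\<And>r. norm (g r) \<le> Gb"
begin

lemma Gb0: "0 \<le> Gb" using gb[of 0] norm_ge_zero order_trans by blast

lemma meas_pM:
  assumes "continuous_on UNIV Y"
  shows "(\<lambda>r. p (M r) (Y r)) \<in> borel_measurable borel"
proof (rule borel_measurable_continuous_Pair[where H=p, OF M_meas])
  show "Y \<in> borel_measurable borel" using assms borel_measurable_continuous_onI by blast
  show "continuous_on UNIV (\<lambda>x. p (fst x) (snd x))"
    by (intro bounded_bilinear.continuous_on[OF bb] continuous_intros)
qed

lemma integ_pM:
  assumes "continuous_on {a..b} Y"
  shows "(\<lambda>r. p (M r) (Y r)) integrable_on {a..b}"
proof (cases "a \<le> b")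
  case True
  note c = clamp_ext[OF assms True]
  obtain B where B: "\<And>r. r \<in> {a..b} \<Longrightarrow> norm (Y r) \<le> B" using bounded_on_Icc[OF assms] by blast
  have "(\<lambda>r. p (M r) (Y (max a (min b r)))) integrable_on {a..b}"
  proof (rule integrable_bdd_borel)
    show "(\<lambda>r. p (M r) (Y (max a (min b r)))) \<in> borel_measurable borel"
      using c by (intro meas_pM) auto
    fix r assume r: "r \<in> {a..b}"
    have "norm (p (M r) (Y (max a (min b r)))) \<le> K * norm (Y (max a (min b r)))" by (rule Kb)
    also have "\<dots> \<le> K * B" using B[of "max a (min b r)"] True K0 by (intro mult_left_mono) auto
    finally show "norm (p (M r) (Y (max a (min b r)))) \<le> K * B" .
  qed
  then show ?thesis by (rule integrable_eq) (use c in auto)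
next
  case False
  then show ?thesis by (simp add: integrable_on_empty)
qed

lemma integ_g: "g integrable_on {a..b}"
  by (rule integrable_bdd_borel[OF g_meas gb])

lemma integ_F:
  assumes "continuous_on {a..b} Y"
  shows "(\<lambda>r. p (M r) (Y r) + g r) integrable_on {a..b}"
  by (intro integrable_add integ_pM integ_g assms)

lemma sol_repr:
  assumes "solfrom p M g s X" "s \<le> t"
  shows "X t = X s + integral {s..t} (\<lambda>r. p (M r) (X r) + g r)"
  using assms unfolding solfrom_def by (metis add.commute diff_add_cancel integral_unique order_refl)

lemma sol_cont:
  assumes X: "solfrom p M g s X" and "s \<le> T"
  shows "continuous_on {s..T} X"
proof -
  have int: "(\<lambda>r. p (M r) (X r) + g r) integrable_on {s..T}"
    using X assms(2) unfolding solfrom_def by blast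
  have "continuous_on {s..T} (\<lambda>t. X s + integral {s..t} (\<lambda>r. p (M r) (X r) + g r))"
    by (intro continuous_on_add continuous_on_const indefinite_integral_continuous_1 int)
  then show ?thesis
    by (rule continuous_on_eq) (metis atLeastAtMost_iff sol_repr[OF X])
qed

lemma sol_of_repr:
  assumes cont: "continuous_on UNIV X"
    and rep: "\<And>t. s \<le> t \<Longrightarrow> X t = x0 + integral {s..t} (\<lambda>r. p (M r) (X r) + g r)"
  shows "solfrom p M g s X"
  unfolding solfrom_def
proof (intro allI impI)
  fix a b assume ab: "s \<le> a" "a \<le> b"
  let ?F = "\<lambda>r. p (M r) (X r) + g r"
  have int: "?F integrable_on {s..b}" by (intro integ_F continuous_on_subset[OF cont]) auto
  have "integral {s..a} ?F + integral {a..b} ?F = integral {s..b} ?F"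
    using ab by (intro Henstock_Kurzweil_Integration.integral_combine int) auto
  then have "X b - X a = integral {a..b} ?F" using rep[of a] rep[of b] ab by (simp add: algebra_simps)
  moreover have "?F integrable_on {a..b}" by (intro integ_F continuous_on_subset[OF cont]) auto
  ultimately show "(?F has_integral (X b - X a)) {a..b}" by (metis integrable_integral)
qed

lemma sol_unique:
  assumes X: "solfrom p M g s X" and Y: "solfrom p M g s Y" and eq: "X s = Y s" and t: "s \<le> t"
  shows "X t = Y t"
proof -
  have cX: "continuous_on {s..t} X" and cY: "continuous_on {s..t} Y"
    using sol_cont X Y t by auto
  have rep: "X r - Y r = integral {s..r} (\<lambda>q. p (M q) (X q - Y q))" if r: "r \<in> {s..t}" for r
  proof -
    have iX: "(\<lambda>q. p (M q) (X q)) integrable_on {s..r}" and iY: "(\<lambda>q. p (M q) (Y q)) integrable_on {s..r}"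
      using r by (auto intro!: integ_pM continuous_on_subset[OF cX] continuous_on_subset[OF cY])
    have "X r - Y r = integral {s..r} (\<lambda>q. p (M q) (X q) + g q) - integral {s..r} (\<lambda>q. p (M q) (Y q) + g q)"
      using sol_repr[OF X, of r] sol_repr[OF Y, of r] r eq by auto
    also have "\<dots> = integral {s..r} (\<lambda>q. p (M q) (X q)) - integral {s..r} (\<lambda>q. p (M q) (Y q))"
      using iX iY integ_g by (simp add: integral_add)
    also have "\<dots> = integral {s..r} (\<lambda>q. p (M q) (X q) - p (M q) (Y q))"
      using iX iY by (simp add: integral_diff)
    also have "\<dots> = integral {s..r} (\<lambda>q. p (M q) (X q - Y q))"
      by (simp add: bounded_bilinear.diff_right[OF bb])
    finally show ?thesis .
  qed
  have cZ: "continuous_on {s..t} (\<lambda>r. norm (X r - Y r))"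
    by (intro continuous_intros cX cY)
  have "norm (X t - Y t) \<le> 0 * exp (K * (t - s))"
  proof (rule gronwall[OF cZ _ _ K0 order_refl])
    fix r assume r: "r \<in> {s..t}"
    have "norm (X r - Y r) \<le> integral {s..r} (\<lambda>q. K * norm (X q - Y q))"
      unfolding rep[OF r]
    proof (rule integral_norm_bound_integral)
      show "(\<lambda>q. p (M q) (X q - Y q)) integrable_on {s..r}"
        using r by (intro integ_pM continuous_intros continuous_on_subset[OF cX] continuous_on_subset[OF cY]) auto
      show "(\<lambda>q. K * norm (X q - Y q)) integrable_on {s..r}"
        using r by (intro integrable_continuous_interval continuous_intros continuous_on_subset[OF cX] continuous_on_subset[OF cY]) auto
    qed (rule Kb)
    then show "norm (X r - Y r) \<le> 0 + K * integral {s..r} (\<lambda>q. norm (X q - Y q))" by simp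
  qed (use t in auto)
  then show ?thesis by simp
qed

lemma sol_bound:
  assumes X: "solfrom p M g s X" and t: "s \<le> t"
  shows "norm (X t) \<le> (norm (X s) + Gb * (t - s)) * exp (K * (t - s))"
proof -
  have cX: "continuous_on {s..t} X" using sol_cont X t by auto
  show ?thesis
  proof (rule gronwall[where \<phi>="\<lambda>r. norm (X r)"])
    show "continuous_on {s..t} (\<lambda>r. norm (X r))" by (intro continuous_intros cX)
    show "0 \<le> norm (X s) + Gb * (t - s)" using Gb0 t by simp
    fix r assume r: "r \<in> {s..t}"
    have ci: "continuous_on {s..r} X" using r by (auto intro: continuous_on_subset[OF cX])
    have "norm (X r) \<le> norm (X s) + norm (integral {s..r} (\<lambda>q. p (M q) (X q) + g q))"
      using sol_repr[OF X, of r] r by (simp add: norm_triangle_ineq)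
    also have "norm (integral {s..r} (\<lambda>q. p (M q) (X q) + g q)) \<le> integral {s..r} (\<lambda>q. K * norm (X q) + Gb)"
    proof (rule integral_norm_bound_integral)
      show "(\<lambda>q. p (M q) (X q) + g q) integrable_on {s..r}" by (intro integ_F ci)
      show "(\<lambda>q. K * norm (X q) + Gb) integrable_on {s..r}"
        by (intro integrable_continuous_interval continuous_intros ci)
      fix q show "norm (p (M q) (X q) + g q) \<le> K * norm (X q) + Gb"
        using Kb[of q "X q"] gb[of q] norm_triangle_ineq[of "p (M q) (X q)" "g q"] by linarith
    qed
    also have "integral {s..r} (\<lambda>q. K * norm (X q) + Gb) = K * integral {s..r} (\<lambda>q. norm (X q)) + Gb * (r - s)"
      using r by (subst integral_add) (auto intro!: integrable_continuous_interval continuous_intros ci)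
    finally show "norm (X r) \<le> norm (X s) + Gb * (t - s) + K * integral {s..r} (\<lambda>q. norm (X q))"
      using r Gb0 mult_left_mono[of "r - s" "t - s" Gb] by auto
  qed (use K0 t in auto)
qed

lemma sol_lip:
  assumes X: "solfrom p M g s X" and tt: "s \<le> t" "t \<le> t'"
    and B: "\<And>r. r \<in> {t..t'} \<Longrightarrow> norm (X r) \<le> Bx"
  shows "norm (X t' - X t) \<le> (K * Bx + Gb) * (t' - t)"
proof -
  have hi: "((\<lambda>r. p (M r) (X r) + g r) has_integral (X t' - X t)) {t..t'}"
    using X tt unfolding solfrom_def by auto
  have B0: "0 \<le> K * Bx + Gb" using B[of t] tt K0 Gb0 by (meson atLeastAtMost_iff add_nonneg_nonneg mult_nonneg_nonneg norm_ge_zero order_refl order_trans)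
  have bnd: "norm (p (M r) (X r) + g r) \<le> K * Bx + Gb" if "r \<in> {t..t'} - {}" for r
  proof -
    have "norm (X r) \<le> Bx" using B that by auto
    then show ?thesis
      using Kb[of r "X r"] gb[of r] norm_triangle_ineq[of "p (M r) (X r)" "g r"] K0
      by (smt (verit) mult_left_mono)
  qed
  show ?thesis
    using has_integral_bound_real[OF B0 finite.emptyI hi bnd] tt by simp
qed

end

(* ---- E ---- *)

lemma isCont_from_le:
  fixes f :: "real \<Rightarrow> 'b::topological_space"
  assumes "\<And>T. continuous_on {..T} f"
  shows "continuous_on UNIV f"
proof -
  have "isCont f t" for t
    using continuous_on_interior[OF assms[of "t+1"], of t] by simp
  then show ?thesis by (simp add: continuous_on_eq_continuous_at)
qed

lemma cont_intmax:
  fixes F :: "real \<Rightarrow> 'b::banach"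
  assumes "\<And>a b. F integrable_on {a..b}"
  shows "continuous_on UNIV (\<lambda>t. integral {s..max s t} F)"
proof (rule isCont_from_le)
  fix T
  show "continuous_on {..T} (\<lambda>t. integral {s..max s t} F)"
  proof (rule continuous_on_compose2[of "{s..max s T}" "\<lambda>x. integral {s..x} F"])
    show "continuous_on {s..max s T} (\<lambda>x. integral {s..x} F)"
      by (rule indefinite_integral_continuous_1[OF assms])
  qed (auto intro!: continuous_intros)
qed

lemma alg1: "(K::real) * (A * K ^ n / fact (Suc n) * (z ^ Suc (Suc n) / real (Suc (Suc n))))
   = A * K ^ Suc n * z ^ Suc (Suc n) / fact (Suc (Suc n))"
proof -
  have "fact (Suc (Suc n)) = real (Suc (Suc n)) * fact (Suc n)" by (simp only: fact_Suc)
  then show ?thesis by (simp add: field_simps)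
qed

lemma aux_lt: "0 < (e::real) \<Longrightarrow> 0 \<le> q \<Longrightarrow> e * q / (q + 1) < e"
  by (simp add: field_simps)

context lode begin

primrec pic :: "'a \<Rightarrow> real \<Rightarrow> nat \<Rightarrow> real \<Rightarrow> 'a" where
  "pic x0 s 0 = (\<lambda>t. x0)"
| "pic x0 s (Suc n) = (\<lambda>t. x0 + integral {s..max s t} (\<lambda>r. p (M r) (pic x0 s n r) + g r))"

lemma pic_cont: "continuous_on UNIV (pic x0 s n)"
proof (induction n)
  case 0 then show ?case by simp
next
  case (Suc n)
  have "\<And>a b. (\<lambda>r. p (M r) (pic x0 s n r) + g r) integrable_on {a..b}"
    by (intro integ_F continuous_on_subset[OF Suc.IH]) auto
  then show ?case by (simp only: pic.simps) (intro continuous_intros cont_intmax)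
qed

lemma pic_F_int: "(\<lambda>r. p (M r) (pic x0 s n r) + g r) integrable_on {a..b}"
  by (intro integ_F continuous_on_subset[OF pic_cont]) auto

lemma pic_pM_int: "(\<lambda>r. p (M r) (pic x0 s n r)) integrable_on {a..b}"
  by (intro integ_pM continuous_on_subset[OF pic_cont]) auto

lemma pic_diff_bound:
  "norm (pic x0 s (Suc n) t - pic x0 s n t)
     \<le> (K * norm x0 + Gb) * K ^ n * (max 0 (t - s)) ^ Suc n / fact (Suc n)"
proof (induction n arbitrary: t)
  case 0
  have B0: "0 \<le> K * norm x0 + Gb" using K0 Gb0 by simp
  have hi: "((\<lambda>r. p (M r) x0 + g r) has_integral integral {s..max s t} (\<lambda>r. p (M r) x0 + g r)) {s..max s t}"
    using pic_F_int[of x0 s 0] by (simp add: integrable_integral)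
  have bnd: "norm (p (M r) x0 + g r) \<le> K * norm x0 + Gb" if "r \<in> {s..max s t} - {}" for r
    using Kb[of r x0] gb[of r] norm_triangle_ineq[of "p (M r) x0" "g r"] by linarith
  have "norm (integral {s..max s t} (\<lambda>r. p (M r) x0 + g r)) \<le> (K * norm x0 + Gb) * (max s t - s)"
    using has_integral_bound_real[OF B0 finite.emptyI hi bnd] by simp
  then show ?case by (cases "s \<le> t") (simp_all add: max_def)
next
  case (Suc n)
  let ?C = "(K * norm x0 + Gb) * K ^ n / fact (Suc n)"
  have C0: "0 \<le> ?C" using K0 Gb0 by simp
  have "pic x0 s (Suc (Suc n)) t - pic x0 s (Suc n) t
      = integral {s..max s t} (\<lambda>r. p (M r) (pic x0 s (Suc n) r) + g r) - integral {s..max s t} (\<lambda>r. p (M r) (pic x0 s n r) + g r)"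
    by (simp only: pic.simps) simp
  also have "\<dots> = integral {s..max s t} (\<lambda>r. p (M r) (pic x0 s (Suc n) r - pic x0 s n r))"
    by (subst integral_diff[symmetric]) (auto intro!: pic_F_int simp del: pic.simps simp: bounded_bilinear.diff_right[OF bb])
  finally have eq: "pic x0 s (Suc (Suc n)) t - pic x0 s (Suc n) t = \<dots>" .
  have hp: "((\<lambda>r. K * (?C * (r - s) ^ Suc n)) has_integral (K * (?C * ((max s t - s) ^ Suc (Suc n) / Suc (Suc n))))) {s..max s t}"
    by (intro has_integral_mult_right poly_has_integral) simp
  have "norm (integral {s..max s t} (\<lambda>r. p (M r) (pic x0 s (Suc n) r - pic x0 s n r)))
       \<le> integral {s..max s t} (\<lambda>r. K * (?C * (r - s) ^ Suc n))"
  proof (rule integral_norm_bound_integral)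
    show "(\<lambda>r. p (M r) (pic x0 s (Suc n) r - pic x0 s n r)) integrable_on {s..max s t}"
      by (intro integ_pM continuous_intros continuous_on_subset[OF pic_cont]) auto
    show "(\<lambda>r. K * (?C * (r - s) ^ Suc n)) integrable_on {s..max s t}" using hp by blast
    fix r assume r: "r \<in> {s..max s t}"
    have "norm (p (M r) (pic x0 s (Suc n) r - pic x0 s n r)) \<le> K * norm (pic x0 s (Suc n) r - pic x0 s n r)"
      by (rule Kb)
    also have "\<dots> \<le> K * (?C * (r - s) ^ Suc n)"
      using Suc.IH[of r] r K0 by (intro mult_left_mono) (auto simp: max_def)
    finally show "norm (p (M r) (pic x0 s (Suc n) r - pic x0 s n r)) \<le> K * (?C * (r - s) ^ Suc n)" .
  qed
  also have "\<dots> = K * (?C * ((max s t - s) ^ Suc (Suc n) / Suc (Suc n)))"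
    using hp by (rule integral_unique)
  also have "\<dots> = (K * norm x0 + Gb) * K ^ Suc n * (max 0 (t - s)) ^ Suc (Suc n) / fact (Suc (Suc n))"
  proof -
    have mm: "max s t - s = max 0 (t - s)" by (simp add: max_def)
    show ?thesis unfolding alg1 mm ..
  qed
  finally show ?case unfolding eq .
qed


lemma pic_sum: "pic x0 s n t = x0 + (\<Sum>i<n. pic x0 s (Suc i) t - pic x0 s i t)"
  by (subst sum_lessThan_telescope[where f="\<lambda>i. pic x0 s i t"]) simp

definition picX :: "'a \<Rightarrow> real \<Rightarrow> real \<Rightarrow> 'a" where
  "picX x0 s t = x0 + (\<Sum>i. pic x0 s (Suc i) t - pic x0 s i t)"

lemma pic_unif:
  assumes sT: "s \<le> T"
  shows "uniform_limit {..T} (\<lambda>n t. pic x0 s n t) (picX x0 s) sequentially"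
proof -
  define A where "A = K * norm x0 + Gb"
  have A0: "0 \<le> A" using K0 Gb0 by (simp add: A_def)
  let ?D = "\<lambda>i. A * K ^ i * (T - s) ^ Suc i / fact (Suc i)"
  have bnd: "norm (pic x0 s (Suc i) t - pic x0 s i t) \<le> ?D i" if t: "t \<in> {..T}" for i t
  proof -
    have "norm (pic x0 s (Suc i) t - pic x0 s i t) \<le> A * K ^ i * (max 0 (t - s)) ^ Suc i / fact (Suc i)"
      using pic_diff_bound unfolding A_def .
    also have "\<dots> \<le> ?D i"
      using t A0 K0 sT
      by (intro divide_right_mono mult_left_mono power_mono) auto
    finally show ?thesis .
  qed
  have summ: "summable ?D"
  proof (rule summable_comparison_test')
    show "summable (\<lambda>i. A * (T - s) * (inverse (fact i) * (K * (T - s)) ^ i))"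
      by (intro summable_mult summable_exp)
    fix i :: nat
    have "norm (?D i) = A * (T - s) * (K * (T - s)) ^ i / fact (Suc i)"
      using A0 K0 sT by (simp add: power_mult_distrib)
    also have "\<dots> \<le> A * (T - s) * (K * (T - s)) ^ i / fact i"
      using A0 K0 sT by (intro divide_left_mono mult_nonneg_nonneg) (auto simp: fact_mono)
    also have "\<dots> = A * (T - s) * (inverse (fact i) * (K * (T - s)) ^ i)"
      by (simp add: field_simps)
    finally show "norm (?D i) \<le> A * (T - s) * (inverse (fact i) * (K * (T - s)) ^ i)" .
  qed
  have "uniform_limit {..T} (\<lambda>n t. \<Sum>i<n. pic x0 s (Suc i) t - pic x0 s i t)
          (\<lambda>t. \<Sum>i. pic x0 s (Suc i) t - pic x0 s i t) sequentially"
    by (rule Weierstrass_m_test[OF bnd summ])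
  then have "uniform_limit {..T} (\<lambda>n t. x0 + (\<Sum>i<n. pic x0 s (Suc i) t - pic x0 s i t))
          (\<lambda>t. x0 + (\<Sum>i. pic x0 s (Suc i) t - pic x0 s i t)) sequentially"
    by (intro uniform_limit_add uniform_limit_const)
  then show ?thesis
    unfolding picX_def by (subst (asm) pic_sum[symmetric])
qed

lemma picX_cont: "continuous_on UNIV (picX x0 s)"
proof (rule isCont_from_le)
  fix T
  have "\<forall>n. continuous_on {..max s T} (pic x0 s n)" using continuous_on_subset[OF pic_cont] by blast
  then have "continuous_on {..max s T} (picX x0 s)"
    by (intro uniform_limit_theorem[OF always_eventually pic_unif]) auto
  then show "continuous_on {..T} (picX x0 s)" by (rule continuous_on_subset) auto
qed

lemma picX_repr:
  assumes t: "s \<le> t"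
  shows "picX x0 s t = x0 + integral {s..t} (\<lambda>r. p (M r) (picX x0 s r) + g r)"
proof -
  let ?X = "picX x0 s"
  have U: "uniform_limit {..t} (\<lambda>n t. pic x0 s n t) ?X sequentially" by (rule pic_unif[OF t])
  have l1: "(\<lambda>n. pic x0 s (Suc n) t) \<longlonglongrightarrow> ?X t"
    using LIMSEQ_Suc[OF tendsto_uniform_limitI[OF U, of t]] by (simp del: pic.simps)
  have l2: "(\<lambda>n. integral {s..t} (\<lambda>r. p (M r) (pic x0 s n r) + g r))
             \<longlonglongrightarrow> integral {s..t} (\<lambda>r. p (M r) (?X r) + g r)"
  proof (rule LIMSEQ_I)
    fix e :: real assume e: "0 < e"
    define e' where "e' = e / (K * (t - s) + 1)"
    have "0 < K * (t - s) + 1" using K0 t by (simp add: add_nonneg_pos)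
    then have e': "0 < e'" using e by (simp add: e'_def)
    from uniform_limitD[OF U e'] obtain N where N: "\<And>n. n \<ge> N \<Longrightarrow> \<forall>r\<in>{..t}. dist (pic x0 s n r) (?X r) < e'"
      by (auto simp: eventually_sequentially)
    show "\<exists>N. \<forall>n\<ge>N. norm (integral {s..t} (\<lambda>r. p (M r) (pic x0 s n r) + g r) - integral {s..t} (\<lambda>r. p (M r) (?X r) + g r)) < e"
    proof (intro exI allI impI)
      fix n assume n: "N \<le> n"
      have iX: "(\<lambda>r. p (M r) (?X r) + g r) integrable_on {s..t}"
        by (intro integ_F continuous_on_subset[OF picX_cont]) auto
      have "integral {s..t} (\<lambda>r. p (M r) (pic x0 s n r) + g r) - integral {s..t} (\<lambda>r. p (M r) (?X r) + g r)
          = integral {s..t} (\<lambda>r. p (M r) (pic x0 s n r - ?X r))"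
        by (subst integral_diff[symmetric]) (auto intro!: pic_F_int iX simp del: pic.simps simp: bounded_bilinear.diff_right[OF bb])
      also have "norm \<dots> \<le> integral {s..t} (\<lambda>r. K * e')"
      proof (rule integral_norm_bound_integral)
        show "(\<lambda>r. p (M r) (pic x0 s n r - ?X r)) integrable_on {s..t}"
          by (intro integ_pM continuous_intros continuous_on_subset[OF pic_cont] continuous_on_subset[OF picX_cont]) auto
        fix r assume r: "r \<in> {s..t}"
        have "norm (p (M r) (pic x0 s n r - ?X r)) \<le> K * norm (pic x0 s n r - ?X r)" by (rule Kb)
        also have "\<dots> \<le> K * e'" using N[OF n] r K0 by (intro mult_left_mono) (auto simp: dist_norm less_imp_le)
        finally show "norm (p (M r) (pic x0 s n r - ?X r)) \<le> K * e'" .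
      qed auto
      also have "\<dots> = K * e' * (t - s)" using t by simp
      also have "\<dots> < e"
      proof -
        have "K * e' * (t - s) = e * (K * (t - s)) / (K * (t - s) + 1)" by (simp add: e'_def)
        also have "\<dots> < e" using aux_lt[OF e, of "K * (t - s)"] K0 t by simp
        finally show ?thesis .
      qed
      finally show "norm (integral {s..t} (\<lambda>r. p (M r) (pic x0 s n r) + g r) - integral {s..t} (\<lambda>r. p (M r) (?X r) + g r)) < e" .
    qed
  qed
  have l3: "(\<lambda>n. pic x0 s (Suc n) t) \<longlonglongrightarrow> x0 + integral {s..t} (\<lambda>r. p (M r) (?X r) + g r)"
    using tendsto_add[OF tendsto_const l2, of x0] t by (simp add: max_def)
  show ?thesis using LIMSEQ_unique[OF l1 l3] .
qed

lemma exists_sol: "\<exists>X. solfrom p M g s X \<and> X s = x0 \<and> continuous_on UNIV X"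
proof (intro exI conjI)
  show "solfrom p M g s (picX x0 s)"
    by (rule sol_of_repr[OF picX_cont picX_repr])
  show "picX x0 s s = x0" using picX_repr[of s s x0] by simp
qed (rule picX_cont)

end

(* ---- CD ---- *)

lemma int_cmult: "(f::'a::euclidean_space\<Rightarrow>real) integrable_on S \<Longrightarrow> (\<lambda>x. c * f x) integrable_on S"
  using integrable_cmul[of f S c] by simp

lemma cont_dep:
  fixes p :: "'m::euclidean_space \<Rightarrow> 'a::euclidean_space \<Rightarrow> 'a"
  assumes L: "\<And>k. lode p (Mk k) (gk k) K Gb" and L0: "lode p M0 g0 K Gb"
    and Xk: "\<And>k. solfrom p (Mk k) (gk k) 0 (Xk k)" and X0: "solfrom p M0 g0 0 X0"
    and init: "\<And>k. Xk k 0 = X0 0"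
    and dM: "(\<lambda>k. integral {0..T} (\<lambda>r. norm (Mk k r - M0 r))) \<longlonglongrightarrow> 0"
    and dMi: "\<And>k. (\<lambda>r. norm (Mk k r - M0 r)) integrable_on {0..T}"
    and dg: "(\<lambda>k. integral {0..T} (\<lambda>r. norm (gk k r - g0 r))) \<longlonglongrightarrow> 0"
    and dgi: "\<And>k. (\<lambda>r. norm (gk k r - g0 r)) integrable_on {0..T}"
    and tau: "\<tau>k \<longlonglongrightarrow> \<tau>0" and t0: "0 \<le> \<tau>0" "\<tau>0 < T" and tk: "\<And>k. 0 \<le> \<tau>k k"
  shows "(\<lambda>k. Xk k (\<tau>k k)) \<longlonglongrightarrow> X0 \<tau>0"
proof -
  interpret l0: lode p M0 g0 K Gb by (rule L0)
  have T0: "0 \<le> T" using t0 by simp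
  obtain Kp where Kp: "Kp > 0" "\<And>a b. norm (p a b) \<le> norm a * norm b * Kp"
    using bounded_bilinear.pos_bounded[OF l0.bb] by blast
  have cX0: "continuous_on {0..T} X0" by (rule l0.sol_cont[OF X0 T0])
  obtain Bx where Bx: "\<And>r. r \<in> {0..T} \<Longrightarrow> norm (X0 r) \<le> Bx" using bounded_on_Icc[OF cX0] by blast
  have Bx0: "0 \<le> Bx" using Bx[of 0] T0 by (meson atLeastAtMost_iff norm_ge_zero order_refl order_trans)
  define \<epsilon> where "\<epsilon> k = Kp * Bx * integral {0..T} (\<lambda>r. norm (Mk k r - M0 r)) + integral {0..T} (\<lambda>r. norm (gk k r - g0 r))" for k
  have est: "norm (Xk k t - X0 t) \<le> \<epsilon> k * exp (K * T)" if t: "t \<in> {0..T}" for k t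
  proof -
    interpret lk: lode p "Mk k" "gk k" K Gb by (rule L)
    have cXk: "continuous_on {0..T} (Xk k)" by (rule lk.sol_cont[OF Xk T0])
    have e0: "0 \<le> \<epsilon> k"
      unfolding \<epsilon>_def using Kp Bx0 dMi dgi
      by (intro add_nonneg_nonneg mult_nonneg_nonneg integral_nonneg) auto
    have phi: "norm (Xk k t - X0 t) \<le> \<epsilon> k * exp (K * (t - 0))"
    proof (rule gronwall[where \<phi>="\<lambda>t. norm (Xk k t - X0 t)"])
      show "continuous_on {0..T} (\<lambda>t. norm (Xk k t - X0 t))" by (intro continuous_intros cXk cX0)
      fix r assume r: "r \<in> {0..T}"
      have cXk': "continuous_on {0..r} (Xk k)" and cX0': "continuous_on {0..r} X0"
        using r by (auto intro: continuous_on_subset[OF cXk] continuous_on_subset[OF cX0])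
      have i1: "(\<lambda>q. p (Mk k q) (Xk k q) + gk k q) integrable_on {0..r}" by (rule lk.integ_F[OF cXk'])
      have i2: "(\<lambda>q. p (M0 q) (X0 q) + g0 q) integrable_on {0..r}" by (rule l0.integ_F[OF cX0'])
      have "Xk k r - X0 r = integral {0..r} (\<lambda>q. p (Mk k q) (Xk k q) + gk k q) - integral {0..r} (\<lambda>q. p (M0 q) (X0 q) + g0 q)"
        using lk.sol_repr[OF Xk, of r] l0.sol_repr[OF X0, of r] r init[of k] by auto
      also have "\<dots> = integral {0..r} (\<lambda>q. (p (Mk k q) (Xk k q) + gk k q) - (p (M0 q) (X0 q) + g0 q))"
        using i1 i2 by (simp add: integral_diff)
      finally have eq: "Xk k r - X0 r = integral {0..r} (\<lambda>q. (p (Mk k q) (Xk k q) + gk k q) - (p (M0 q) (X0 q) + g0 q))" .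
      have iM: "(\<lambda>q. norm (Mk k q - M0 q)) integrable_on {0..r}"
        using r by (intro integrable_on_subinterval[OF dMi]) auto
      have ig: "(\<lambda>q. norm (gk k q - g0 q)) integrable_on {0..r}"
        using r by (intro integrable_on_subinterval[OF dgi]) auto
      have iphi: "(\<lambda>q. norm (Xk k q - X0 q)) integrable_on {0..r}"
        by (intro integrable_continuous_interval continuous_intros cXk' cX0')
      have "norm (Xk k r - X0 r) \<le> integral {0..r} (\<lambda>q. K * norm (Xk k q - X0 q) + (Kp * Bx * norm (Mk k q - M0 q) + norm (gk k q - g0 q)))"
        unfolding eq
      proof (rule integral_norm_bound_integral)
        show "(\<lambda>q. (p (Mk k q) (Xk k q) + gk k q) - (p (M0 q) (X0 q) + g0 q)) integrable_on {0..r}"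
          using i1 i2 by (rule integrable_diff)
        show "(\<lambda>q. K * norm (Xk k q - X0 q) + (Kp * Bx * norm (Mk k q - M0 q) + norm (gk k q - g0 q))) integrable_on {0..r}"
          by (intro integrable_add int_cmult iphi iM ig)
        fix q assume q: "q \<in> {0..r}"
        have "(p (Mk k q) (Xk k q) + gk k q) - (p (M0 q) (X0 q) + g0 q)
              = p (Mk k q) (Xk k q - X0 q) + p (Mk k q - M0 q) (X0 q) + (gk k q - g0 q)"
          by (simp add: bounded_bilinear.diff_right[OF l0.bb] bounded_bilinear.diff_left[OF l0.bb])
        also have "norm \<dots> \<le> norm (p (Mk k q) (Xk k q - X0 q)) + norm (p (Mk k q - M0 q) (X0 q)) + norm (gk k q - g0 q)"
          by (meson norm_triangle_ineq add_mono order_trans order_refl)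
        also have "\<dots> \<le> K * norm (Xk k q - X0 q) + (Kp * Bx * norm (Mk k q - M0 q) + norm (gk k q - g0 q))"
        proof -
          have "norm (p (Mk k q - M0 q) (X0 q)) \<le> norm (Mk k q - M0 q) * norm (X0 q) * Kp" by (rule Kp(2))
          also have "\<dots> \<le> norm (Mk k q - M0 q) * Bx * Kp"
            using Bx[of q] q r Kp(1) by (intro mult_right_mono mult_left_mono) auto
          finally show ?thesis using lk.Kb[of q "Xk k q - X0 q"] by (simp add: algebra_simps)
        qed
        finally show "norm ((p (Mk k q) (Xk k q) + gk k q) - (p (M0 q) (X0 q) + g0 q))
            \<le> K * norm (Xk k q - X0 q) + (Kp * Bx * norm (Mk k q - M0 q) + norm (gk k q - g0 q))" .
      qed
      also have "\<dots> = K * integral {0..r} (\<lambda>q. norm (Xk k q - X0 q)) + (Kp * Bx * integral {0..r} (\<lambda>q. norm (Mk k q - M0 q)) + integral {0..r} (\<lambda>q. norm (gk k q - g0 q)))"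
        using iphi iM ig by (simp add: integral_add int_cmult integrable_add)
      also have "\<dots> \<le> K * integral {0..r} (\<lambda>q. norm (Xk k q - X0 q)) + \<epsilon> k"
      proof -
        have "integral {0..r} (\<lambda>q. norm (Mk k q - M0 q)) \<le> integral {0..T} (\<lambda>q. norm (Mk k q - M0 q))"
          using r by (intro integral_subset_le iM dMi) auto
        moreover have "integral {0..r} (\<lambda>q. norm (gk k q - g0 q)) \<le> integral {0..T} (\<lambda>q. norm (gk k q - g0 q))"
          using r by (intro integral_subset_le ig dgi) auto
        ultimately show ?thesis unfolding \<epsilon>_def using Kp(1) Bx0
          by (smt (verit) mult_left_mono mult_nonneg_nonneg)
      qed
      finally show "norm (Xk k r - X0 r) \<le> \<epsilon> k + K * integral {0..r} (\<lambda>q. norm (Xk k q - X0 q))" by simp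
    qed (use lk.K0 e0 t in auto)
    also have "\<dots> \<le> \<epsilon> k * exp (K * T)"
      using e0 t lk.K0 by (intro mult_left_mono) (auto intro: mult_left_mono)
    finally show ?thesis .
  qed
  have ev: "\<forall>\<^sub>F k in sequentially. \<tau>k k \<in> {0..T}"
  proof -
    have "\<forall>\<^sub>F k in sequentially. \<tau>k k < T" using order_tendstoD(2)[OF tau t0(2)] .
    then show ?thesis by eventually_elim (use tk in \<open>auto simp: less_imp_le\<close>)
  qed
  have l1: "(\<lambda>k. X0 (\<tau>k k)) \<longlonglongrightarrow> X0 \<tau>0"
    by (rule continuous_on_tendsto_compose[OF cX0 tau _ ev]) (use t0 in auto)
  have eps0: "(\<lambda>k. \<epsilon> k * exp (K * T)) \<longlonglongrightarrow> 0"
  proof -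
    have "\<epsilon> \<longlonglongrightarrow> Kp * Bx * 0 + 0" unfolding \<epsilon>_def[abs_def] by (intro tendsto_intros dM dg)
    then show ?thesis using tendsto_mult_right_zero[of \<epsilon> sequentially "exp (K * T)"] by simp
  qed
  have l2: "(\<lambda>k. Xk k (\<tau>k k) - X0 (\<tau>k k)) \<longlonglongrightarrow> 0"
  proof (rule Lim_null_comparison[OF _ eps0])
    show "\<forall>\<^sub>F k in sequentially. norm (Xk k (\<tau>k k) - X0 (\<tau>k k)) \<le> \<epsilon> k * exp (K * T)"
      using ev by eventually_elim (rule est)
  qed
  have "(\<lambda>k. (Xk k (\<tau>k k) - X0 (\<tau>k k)) + X0 (\<tau>k k)) \<longlonglongrightarrow> 0 + X0 \<tau>0"
    by (intro tendsto_add l1 l2)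
  then show ?thesis by simp
qed


(* ---- C ---- *)

lemma bb_mv: "bounded_bilinear (\<lambda>(M::real^'n^'n) (x::real^'n). M *v x)"
  unfolding bilinear_conv_bounded_bilinear[symmetric]
  by (auto simp: bilinear_def linear_iff vec_eq_iff matrix_vector_mult_def sum.distrib sum_distrib_left algebra_simps)

lemma bb_mm: "bounded_bilinear (\<lambda>(M::real^'n^'n) (x::real^'n^'n). M ** x)"
  unfolding bilinear_conv_bounded_bilinear[symmetric]
  by (auto simp: bilinear_def linear_iff vec_eq_iff matrix_matrix_mult_def sum.distrib sum_distrib_left algebra_simps)

lemma Amat_lin: "Amat A B w = A + (\<Sum>i\<in>UNIV. (w $ i) *\<^sub>R B i)"
  by (simp add: Amat_def)

lemma Amat_cont:
  fixes A :: "real^'n^'n" and B :: "'m::finite \<Rightarrow> real^'n^'n"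
  shows "continuous_on UNIV (Amat A B)"
proof -
  have "linear (\<lambda>w::real^'m. \<Sum>i\<in>UNIV. (w $ i) *\<^sub>R (B i :: real^'n^'n))"
    by (auto simp: linear_iff sum.distrib scaleR_add_left scaleR_sum_right algebra_simps)
  then have "continuous_on UNIV (\<lambda>w::real^'m. \<Sum>i\<in>UNIV. (w $ i) *\<^sub>R (B i :: real^'n^'n))"
    by (simp add: linear_continuous_on linear_conv_bounded_linear)
  then show ?thesis unfolding Amat_def by (intro continuous_intros)
qed

lemma Amat_diff: "norm (Amat A B w - Amat A B w') \<le> norm (w - w') * (\<Sum>i\<in>UNIV. norm (B i))"
proof -
  have "Amat A B w - Amat A B w' = (\<Sum>i\<in>UNIV. ((w - w') $ i) *\<^sub>R B i)"
    by (simp add: Amat_def sum_subtractf scaleR_diff_left)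
  also have "norm \<dots> \<le> (\<Sum>i\<in>UNIV. norm (((w - w') $ i) *\<^sub>R B i))" by (rule norm_sum)
  also have "\<dots> \<le> (\<Sum>i\<in>UNIV. norm (w - w') * norm (B i))"
    using component_le_norm_cart[of "w - w'"] by (intro sum_mono) (auto intro!: mult_right_mono)
  finally show ?thesis by (simp add: sum_distrib_left)
qed

lemma Amat_bound: "norm w \<le> c \<Longrightarrow> norm (Amat A B w) \<le> norm A + c * (\<Sum>i\<in>UNIV. norm (B i))"
proof -
  assume w: "norm w \<le> c"
  have "norm (Amat A B w - Amat A B 0) \<le> norm (w - 0) * (\<Sum>i\<in>UNIV. norm (B i))" by (rule Amat_diff)
  also have "\<dots> \<le> c * (\<Sum>i\<in>UNIV. norm (B i))" using w by (intro mult_right_mono sum_nonneg) auto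
  finally have "norm (Amat A B w - A) \<le> c * (\<Sum>i\<in>UNIV. norm (B i))" by (simp add: Amat_def)
  then show ?thesis using norm_triangle_ineq[of A "Amat A B w - A"] by simp
qed

locale prob =
  fixes A :: "real^'n^'n" and B :: "'m::finite \<Rightarrow> real^'n^'n" and C :: "real^'m^'n"
    and d :: "real^'n" and c :: real
  assumes c0: "0 \<le> c"
begin

definition Kv :: real where "Kv = (SOME K. K > 0 \<and> (\<forall>(a::real^'n^'n) (b::real^'n). norm (a *v b) \<le> norm a * norm b * K) \<and> A = A)"
definition Km :: real where "Km = (SOME K. K > 0 \<and> (\<forall>(a::real^'n^'n) (b::real^'n^'n). norm (a ** b) \<le> norm a * norm b * K) \<and> A = A)"

lemma Kv: "Kv > 0" "\<And>(a::real^'n^'n) (b::real^'n). norm (a *v b) \<le> norm a * norm b * Kv"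
  using someI_ex[OF bounded_bilinear.pos_bounded[OF bb_mv]] unfolding Kv_def by auto

lemma Km: "Km > 0" "\<And>(a::real^'n^'n) (b::real^'n^'n). norm (a ** b) \<le> norm a * norm b * Km"
  using someI_ex[OF bounded_bilinear.pos_bounded[OF bb_mm]] unfolding Km_def by auto

definition Mb :: real where "Mb = norm A + c * (\<Sum>i\<in>UNIV. norm (B i))"
definition Gc :: real where "Gc = onorm ((*v) C) * c + norm d"
definition gg :: "(real \<Rightarrow> real^'m) \<Rightarrow> real \<Rightarrow> real^'n" where "gg u r = C *v u r + d"
definition Mm :: "(real \<Rightarrow> real^'m) \<Rightarrow> real \<Rightarrow> real^'n^'n" where "Mm u r = Amat A B (u r)"
definition adm :: "(real \<Rightarrow> real^'m) \<Rightarrow> bool" where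
  "adm u \<longleftrightarrow> u \<in> borel_measurable borel \<and> (\<forall>t. norm (u t) \<le> c)"

lemma Mb0: "0 \<le> Mb" unfolding Mb_def using c0 by (intro add_nonneg_nonneg mult_nonneg_nonneg sum_nonneg) auto

lemma Mm_meas: "adm u \<Longrightarrow> Mm u \<in> borel_measurable borel"
  unfolding adm_def Mm_def[abs_def] by (intro borel_measurable_continuous_on[OF Amat_cont]) auto

lemma Mm_bound: "adm u \<Longrightarrow> norm (Mm u r) \<le> Mb"
  unfolding adm_def Mm_def Mb_def by (intro Amat_bound) auto

lemma onormC: "norm (C *v w) \<le> onorm ((*v) C) * norm w"
  by (rule onorm) simp

lemma gg_meas: "adm u \<Longrightarrow> gg u \<in> borel_measurable borel"
proof -
  assume "adm u"
  have "continuous_on UNIV (\<lambda>w. C *v w + d)"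
    by (intro continuous_intros linear_continuous_on) simp
  then show ?thesis using \<open>adm u\<close> unfolding adm_def gg_def[abs_def]
    by (intro borel_measurable_continuous_on[where f="\<lambda>w. C *v w + d"]) auto
qed

lemma gg_bound: "adm u \<Longrightarrow> norm (gg u r) \<le> Gc"
proof -
  assume "adm u"
  then have u: "norm (u r) \<le> c" by (simp add: adm_def)
  have "norm (gg u r) \<le> norm (C *v u r) + norm d" unfolding gg_def by (rule norm_triangle_ineq)
  also have "\<dots> \<le> onorm ((*v) C) * c + norm d"
  proof -
    have o: "0 \<le> onorm ((*v) C)" by (rule onorm_pos_le) simp
    show ?thesis using onormC[of "u r"] mult_left_mono[OF u o] by linarith
  qed
  finally show ?thesis by (simp add: Gc_def)
qed

lemma lodeM:
  assumes u: "adm u"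
  shows "lode ((**) :: real^'n^'n \<Rightarrow> real^'n^'n \<Rightarrow> real^'n^'n) (Mm u) (\<lambda>_. 0) (Mb * Km) 0"
proof -
  have kb: "norm (Mm u r ** x) \<le> Mb * Km * norm x" for r and x :: "real^'n^'n"
  proof -
    have "norm (Mm u r ** x) \<le> norm (Mm u r) * norm x * Km" by (rule Km)
    also have "\<dots> \<le> Mb * norm x * Km" using Mm_bound[OF u] Km by (intro mult_right_mono) auto
    finally show ?thesis by (simp add: algebra_simps)
  qed
  show ?thesis
    by (rule lode.intro[OF bb_mm Mm_meas[OF u] _ kb]) (use Mb0 Km in auto)
qed

lemma lodeV:
  assumes u: "adm u"
  shows "lode (*v) (Mm u) (gg u) (Mb * Kv) Gc"
proof (rule lode.intro)
  show "bounded_bilinear ((*v) :: real^'n^'n \<Rightarrow> real^'n \<Rightarrow> _)" by (rule bb_mv)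
  show "Mm u \<in> borel_measurable borel" by (rule Mm_meas[OF u])
  show "gg u \<in> borel_measurable borel" by (rule gg_meas[OF u])
  show "0 \<le> Mb * Kv" using Mb0 Kv by simp
  show "norm (gg u r) \<le> Gc" for r by (rule gg_bound[OF u])
  fix r and x :: "real^'n"
  have "norm (Mm u r *v x) \<le> norm (Mm u r) * norm x * Kv" by (rule Kv)
  also have "\<dots> \<le> Mb * norm x * Kv" using Mm_bound[OF u] Kv by (intro mult_right_mono) auto
  finally show "norm (Mm u r *v x) \<le> Mb * Kv * norm x" by (simp add: algebra_simps)
qed

definition Phi :: "(real \<Rightarrow> real^'m) \<Rightarrow> real \<Rightarrow> real \<Rightarrow> real^'n^'n" where
  "Phi u s = (SOME X. solfrom ((**) :: real^'n^'n \<Rightarrow> real^'n^'n \<Rightarrow> real^'n^'n) (Mm u) (\<lambda>_. 0) s X \<and> X s = mat 1)"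

definition xp :: "(real \<Rightarrow> real^'m) \<Rightarrow> real \<Rightarrow> real^'n" where
  "xp u = (SOME X. solfrom (*v) (Mm u) (gg u) 0 X \<and> X 0 = 0)"

lemma Phi: "adm u \<Longrightarrow> solfrom ((**) :: real^'n^'n \<Rightarrow> real^'n^'n \<Rightarrow> real^'n^'n) (Mm u) (\<lambda>_. 0) s (Phi u s) \<and> Phi u s s = mat 1"
proof -
  assume u: "adm u"
  interpret L: lode "((**) :: real^'n^'n \<Rightarrow> real^'n^'n \<Rightarrow> real^'n^'n)" "Mm u" "\<lambda>_. 0" "Mb * Km" 0 by (rule lodeM[OF u])
  have "\<exists>X. solfrom ((**) :: real^'n^'n \<Rightarrow> real^'n^'n \<Rightarrow> real^'n^'n) (Mm u) (\<lambda>_. 0) s X \<and> X s = mat 1" using L.exists_sol[of s "mat 1"] by blast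
  from someI_ex[OF this] show ?thesis unfolding Phi_def .
qed

lemma xp: "adm u \<Longrightarrow> solfrom (*v) (Mm u) (gg u) 0 (xp u) \<and> xp u 0 = 0"
proof -
  assume u: "adm u"
  interpret L: lode "(*v)" "Mm u" "gg u" "Mb * Kv" Gc by (rule lodeV[OF u])
  have "\<exists>X. solfrom (*v) (Mm u) (gg u) 0 X \<and> X 0 = 0" using L.exists_sol[of 0 0] by blast
  from someI_ex[OF this] show ?thesis unfolding xp_def .
qed

lemma fundsol_eq:
  assumes u: "adm u" and st: "s \<le> t"
  shows "fundsol A B u t s = Phi u s t"
proof -
  interpret L: lode "((**) :: real^'n^'n \<Rightarrow> real^'n^'n \<Rightarrow> real^'n^'n)" "Mm u" "\<lambda>_. 0" "Mb * Km" 0 by (rule lodeM[OF u])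
  have P: "solfrom ((**) :: real^'n^'n \<Rightarrow> real^'n^'n \<Rightarrow> real^'n^'n) (Mm u) (\<lambda>_. 0) s (Phi u s)" "Phi u s s = mat 1" using Phi[OF u] by auto
  have eqv: "(\<forall>a b. s \<le> a \<longrightarrow> a \<le> b \<longrightarrow> ((\<lambda>r. Amat A B (u r) ** \<Phi> r) has_integral (\<Phi> b - \<Phi> a)) {a..b})
      \<longleftrightarrow> solfrom ((**) :: real^'n^'n \<Rightarrow> real^'n^'n \<Rightarrow> real^'n^'n) (Mm u) (\<lambda>_. 0) s \<Phi>" for \<Phi>
    by (simp add: solfrom_def Mm_def)
  show ?thesis unfolding fundsol_def
  proof (rule the_equality)
    show "\<exists>\<Phi>. \<Phi> s = mat 1 \<and> (\<forall>a b. s \<le> a \<longrightarrow> a \<le> b \<longrightarrow> ((\<lambda>r. Amat A B (u r) ** \<Phi> r) has_integral (\<Phi> b - \<Phi> a)) {a..b}) \<and> \<Phi> t = Phi u s t"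
      using P eqv by blast
    fix M' assume "\<exists>\<Phi>. \<Phi> s = mat 1 \<and> (\<forall>a b. s \<le> a \<longrightarrow> a \<le> b \<longrightarrow> ((\<lambda>r. Amat A B (u r) ** \<Phi> r) has_integral (\<Phi> b - \<Phi> a)) {a..b}) \<and> \<Phi> t = M'"
    then obtain \<Phi> where "\<Phi> s = mat 1" "solfrom ((**) :: real^'n^'n \<Rightarrow> real^'n^'n \<Rightarrow> real^'n^'n) (Mm u) (\<lambda>_. 0) s \<Phi>" "\<Phi> t = M'" using eqv by blast
    then show "M' = Phi u s t" using L.sol_unique[OF _ P(1) _ st] P(2) by metis
  qed
qed

lemma Phi_semi:
  assumes u: "adm u" and st: "s \<le> t" and tr: "t \<le> r"
  shows "Phi u s r = Phi u t r ** Phi u s t"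
proof -
  interpret L: lode "((**) :: real^'n^'n \<Rightarrow> real^'n^'n \<Rightarrow> real^'n^'n)" "Mm u" "\<lambda>_. 0" "Mb * Km" 0 by (rule lodeM[OF u])
  have Pt: "solfrom ((**) :: real^'n^'n \<Rightarrow> real^'n^'n \<Rightarrow> real^'n^'n) (Mm u) (\<lambda>_. 0) t (Phi u t)" "Phi u t t = mat 1" using Phi[OF u] by auto
  have Ps: "solfrom ((**) :: real^'n^'n \<Rightarrow> real^'n^'n \<Rightarrow> real^'n^'n) (Mm u) (\<lambda>_. 0) t (Phi u s)" using Phi[OF u] solfrom_mono st by blast
  have Y: "solfrom ((**) :: real^'n^'n \<Rightarrow> real^'n^'n \<Rightarrow> real^'n^'n) (Mm u) (\<lambda>_. 0) t (\<lambda>r. Phi u t r ** Phi u s t)"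
    unfolding solfrom_def
  proof (intro allI impI)
    fix a b assume ab: "t \<le> a" "a \<le> b"
    have h: "((\<lambda>r. Mm u r ** Phi u t r + 0) has_integral (Phi u t b - Phi u t a)) {a..b}"
      using Pt(1) ab unfolding solfrom_def by blast
    have "(((\<lambda>X. X ** Phi u s t) \<circ> (\<lambda>r. Mm u r ** Phi u t r + 0)) has_integral ((Phi u t b - Phi u t a) ** Phi u s t)) {a..b}"
      by (rule has_integral_linear[OF h]) (rule bounded_bilinear.bounded_linear_left[OF bb_mm])
    then show "((\<lambda>r. Mm u r ** (Phi u t r ** Phi u s t) + 0) has_integral (Phi u t b ** Phi u s t - Phi u t a ** Phi u s t)) {a..b}"
      by (simp add: o_def matrix_mul_assoc bounded_bilinear.diff_left[OF bb_mm])
  qed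
  show ?thesis
    by (rule L.sol_unique[OF Ps Y _ tr]) (simp add: Pt(2))
qed

lemma vec_repr:
  assumes u: "adm u" and z: "solfrom (*v) (Mm u) (gg u) 0 z" and t: "0 \<le> t"
  shows "z t = Phi u 0 t *v z 0 + xp u t"
proof -
  interpret V: lode "(*v)" "Mm u" "gg u" "Mb * Kv" Gc by (rule lodeV[OF u])
  have P: "solfrom ((**) :: real^'n^'n \<Rightarrow> real^'n^'n \<Rightarrow> real^'n^'n) (Mm u) (\<lambda>_. 0) 0 (Phi u 0)" "Phi u 0 0 = mat 1" using Phi[OF u] by auto
  have X: "solfrom (*v) (Mm u) (gg u) 0 (xp u)" "xp u 0 = 0" using xp[OF u] by auto
  have Y: "solfrom (*v) (Mm u) (gg u) 0 (\<lambda>r. Phi u 0 r *v z 0 + xp u r)"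
    unfolding solfrom_def
  proof (intro allI impI)
    fix a b :: real assume ab: "0 \<le> a" "a \<le> b"
    have h1: "((\<lambda>r. Mm u r ** Phi u 0 r + 0) has_integral (Phi u 0 b - Phi u 0 a)) {a..b}"
      using P(1) ab unfolding solfrom_def by blast
    have h2: "((\<lambda>r. Mm u r *v xp u r + gg u r) has_integral (xp u b - xp u a)) {a..b}"
      using X(1) ab unfolding solfrom_def by blast
    have h1': "(((\<lambda>X. X *v z 0) \<circ> (\<lambda>r. Mm u r ** Phi u 0 r + 0)) has_integral ((Phi u 0 b - Phi u 0 a) *v z 0)) {a..b}"
      by (rule has_integral_linear[OF h1]) (rule bounded_bilinear.bounded_linear_left[OF bb_mv])
    from has_integral_add[OF h1' h2]
    show "((\<lambda>r. Mm u r *v (Phi u 0 r *v z 0 + xp u r) + gg u r) has_integral (Phi u 0 b *v z 0 + xp u b - (Phi u 0 a *v z 0 + xp u a))) {a..b}"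
      by (simp add: o_def matrix_vector_mul_assoc matrix_vector_right_distrib matrix_vector_mult_diff_rdistrib algebra_simps)
  qed
  show ?thesis using V.sol_unique[OF z Y _ t] P X by simp
qed

lemma is_sol_solfrom: "is_solution A B C d u x \<Longrightarrow> solfrom (*v) (Mm u) (gg u) s x"
  unfolding is_solution_def solfrom_def Mm_def gg_def by (simp add: add.assoc)

lemma per_iter:
  assumes "\<And>t. f (t + \<tau>) = f t"
  shows "f (t + real n * \<tau>) = f t"
proof (induction n)
  case (Suc n)
  have e: "t + real (Suc n) * \<tau> = (t + real n * \<tau>) + \<tau>" by (simp add: algebra_simps)
  show ?case by (simp only: e assms Suc.IH)
qed simp

lemma per_sol:
  assumes u: "adm u" and tau: "\<tau> > 0" and per: "\<And>t. u (t + \<tau>) = u t"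
    and X: "solfrom (*v) (Mm u) (gg u) 0 X" and XT: "X \<tau> = X 0"
  shows "is_periodic_solution A B C d u \<tau> (\<lambda>t. X (t - of_int \<lfloor>t / \<tau>\<rfloor> * \<tau>))"
    and "\<And>t. 0 \<le> t \<Longrightarrow> X (t - of_int \<lfloor>t / \<tau>\<rfloor> * \<tau>) = X t"
proof -
  interpret V: lode "(*v)" "Mm u" "gg u" "Mb * Kv" Gc by (rule lodeV[OF u])
  have Mper: "Mm u (t + \<tau>) = Mm u t" and gper: "gg u (t + \<tau>) = gg u t" for t
    by (simp_all add: Mm_def gg_def per)
  have Y: "solfrom (*v) (Mm u) (gg u) 0 (\<lambda>r. X (r + \<tau>))"
    unfolding solfrom_def
  proof (intro allI impI)
    fix a b :: real assume ab: "0 \<le> a" "a \<le> b"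
    have h: "((\<lambda>r. Mm u r *v X r + gg u r) has_integral (X (b + \<tau>) - X (a + \<tau>))) {a + \<tau>..b + \<tau>}"
      using X ab tau unfolding solfrom_def by auto
    from has_integral_shift_real_ivl[OF h, of \<tau>]
    show "((\<lambda>r. Mm u r *v X (r + \<tau>) + gg u r) has_integral (X (b + \<tau>) - X (a + \<tau>))) {a..b}"
      by (simp add: Mper gper)
  qed
  have shiftX: "X (t + \<tau>) = X t" if "0 \<le> t" for t
    using V.sol_unique[OF Y X _ that] XT by simp
  have iterX: "X (t + real n * \<tau>) = X t" if "0 \<le> t" for t n
  proof (induction n)
    case (Suc n)
    have e: "t + real (Suc n) * \<tau> = (t + real n * \<tau>) + \<tau>" by (simp add: algebra_simps)
    have "X (t + real (Suc n) * \<tau>) = X (t + real n * \<tau>)" unfolding e by (rule shiftX) (use that tau in simp)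
    then show ?case using Suc by simp
  qed simp
  define Z where "Z t = X (t - of_int \<lfloor>t / \<tau>\<rfloor> * \<tau>)" for t
  have Zper: "Z (t + \<tau>) = Z t" for t
  proof -
    have "(t + \<tau>) / \<tau> = t / \<tau> + 1" using tau by (simp add: field_simps)
    then have "\<lfloor>(t + \<tau>) / \<tau>\<rfloor> = \<lfloor>t / \<tau>\<rfloor> + 1" by simp
    then show ?thesis unfolding Z_def by (simp add: algebra_simps)
  qed
  have Zeq: "Z t = X t" if t: "0 \<le> t" for t
  proof -
    define q where "q = t - of_int \<lfloor>t / \<tau>\<rfloor> * \<tau>"
    have q0: "0 \<le> q" unfolding q_def using floor_divide_lower[OF tau, of t] by simp
    have fl: "0 \<le> \<lfloor>t / \<tau>\<rfloor>" using t tau by simp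
    have "t = q + real (nat \<lfloor>t / \<tau>\<rfloor>) * \<tau>" unfolding q_def using fl by simp
    then have "X t = X q" using iterX[OF q0, of "nat \<lfloor>t / \<tau>\<rfloor>"] by simp
    then show ?thesis unfolding Z_def q_def by simp
  qed
  show "\<And>t. 0 \<le> t \<Longrightarrow> X (t - of_int \<lfloor>t / \<tau>\<rfloor> * \<tau>) = X t" using Zeq unfolding Z_def by blast
  have "is_solution A B C d u Z"
    unfolding is_solution_def
  proof (intro allI impI)
    fix a b :: real assume ab: "a \<le> b"
    obtain n :: nat where n: "- a < real n * \<tau>" using reals_Archimedean3[OF tau] by blast
    let ?c = "real n * \<tau>"
    have h: "((\<lambda>r. Mm u r *v X r + gg u r) has_integral (X (b + ?c) - X (a + ?c))) {a + ?c..b + ?c}"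
      using X ab n unfolding solfrom_def by auto
    from has_integral_shift_real_ivl[OF h, of ?c]
    have h2: "((\<lambda>r. Mm u (r + ?c) *v X (r + ?c) + gg u (r + ?c)) has_integral (X (b + ?c) - X (a + ?c))) {a..b}"
      by simp
    have eqs: "X (r + ?c) = Z r" if "a \<le> r" for r
    proof -
      have "X (r + ?c) = Z (r + ?c)" using Zeq[of "r + ?c"] that n by simp
      also have "\<dots> = Z r" by (rule per_iter[of Z, OF Zper])
      finally show ?thesis .
    qed
    have ueq: "u (r + ?c) = u r" for r by (rule per_iter[of u, OF per])
    have hv: "X (b + ?c) - X (a + ?c) = Z b - Z a" using eqs[of b] eqs[of a] ab by simp
    show "((\<lambda>r. Amat A B (u r) *v Z r + C *v u r + d) has_integral (Z b - Z a)) {a..b}"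
    proof (rule has_integral_eq[OF _ h2[unfolded hv]])
      fix r assume "r \<in> {a..b}"
      then show "Mm u (r + ?c) *v X (r + ?c) + gg u (r + ?c) = Amat A B (u r) *v Z r + C *v u r + d"
        using eqs[of r] ueq[of r] by (simp add: Mm_def gg_def add.assoc)
    qed
  qed
  then show "is_periodic_solution A B C d u \<tau> (\<lambda>t. X (t - of_int \<lfloor>t / \<tau>\<rfloor> * \<tau>))"
    unfolding is_periodic_solution_def using Zper unfolding Z_def by blast
qed

lemma vec_sol:
  assumes u: "adm u"
  shows "solfrom (*v) (Mm u) (gg u) 0 (\<lambda>r. Phi u 0 r *v v + xp u r)"
proof -
  have P: "solfrom ((**) :: real^'n^'n \<Rightarrow> real^'n^'n \<Rightarrow> real^'n^'n) (Mm u) (\<lambda>_. 0) 0 (Phi u 0)" "Phi u 0 0 = mat 1" using Phi[OF u] by auto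
  have X: "solfrom (*v) (Mm u) (gg u) 0 (xp u)" "xp u 0 = 0" using xp[OF u] by auto
  show ?thesis
    unfolding solfrom_def
  proof (intro allI impI)
    fix a b :: real assume ab: "0 \<le> a" "a \<le> b"
    have h1: "((\<lambda>r. Mm u r ** Phi u 0 r + 0) has_integral (Phi u 0 b - Phi u 0 a)) {a..b}"
      using P(1) ab unfolding solfrom_def by blast
    have h2: "((\<lambda>r. Mm u r *v xp u r + gg u r) has_integral (xp u b - xp u a)) {a..b}"
      using X(1) ab unfolding solfrom_def by blast
    have h1': "(((\<lambda>X. X *v v) \<circ> (\<lambda>r. Mm u r ** Phi u 0 r + 0)) has_integral ((Phi u 0 b - Phi u 0 a) *v v)) {a..b}"
      by (rule has_integral_linear[OF h1]) (rule bounded_bilinear.bounded_linear_left[OF bb_mv])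
    from has_integral_add[OF h1' h2]
    show "((\<lambda>r. Mm u r *v (Phi u 0 r *v v + xp u r) + gg u r) has_integral (Phi u 0 b *v v + xp u b - (Phi u 0 a *v v + xp u a))) {a..b}"
      by (simp add: o_def matrix_vector_mul_assoc matrix_vector_right_distrib matrix_vector_mult_diff_rdistrib algebra_simps)
  qed
qed

lemma per_init:
  assumes u: "adm u" and x: "is_periodic_solution A B C d u \<tau> x" and tau: "\<tau> > 0"
  shows "(mat 1 - Phi u 0 \<tau>) *v x 0 = xp u \<tau>"
proof -
  have z: "solfrom (*v) (Mm u) (gg u) 0 x" using x is_sol_solfrom unfolding is_periodic_solution_def by blast
  have "x \<tau> = x 0" using x unfolding is_periodic_solution_def by (metis add_0)
  then have "x 0 = Phi u 0 \<tau> *v x 0 + xp u \<tau>" using vec_repr[OF u z, of \<tau>] tau by simp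
  then show ?thesis by (simp add: matrix_vector_mult_diff_rdistrib algebra_simps)
qed

lemma per_exists_unique:
  assumes u: "adm u" and tau: "\<tau> > 0" and per: "\<And>t. u (t + \<tau>) = u t"
    and ns: "\<not> one_in_spec (Phi u 0 \<tau>)"
  shows "\<exists>!x. is_periodic_solution A B C d u \<tau> x"
proof -
  let ?L = "\<lambda>v. (mat 1 - Phi u 0 \<tau>) *v v"
  have inj0: "?L v = 0 \<Longrightarrow> v = 0" for v
    using ns unfolding one_in_spec_def by (auto simp: matrix_vector_mult_diff_rdistrib)
  have lin: "linear ?L" by simp
  have "inj ?L"
  proof (rule injI)
    fix x y assume "?L x = ?L y"
    then have "?L (x - y) = 0" by (simp add: matrix_vector_mult_diff_distrib)
    then show "x = y" using inj0[of "x - y"] by simp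
  qed
  then have "surj ?L" using linear_injective_imp_surjective[OF lin] by blast
  then obtain x0 where x0: "?L x0 = xp u \<tau>" by (metis surjD)
  define X where "X r = Phi u 0 r *v x0 + xp u r" for r
  have Xs: "solfrom (*v) (Mm u) (gg u) 0 X" unfolding X_def[abs_def] by (rule vec_sol[OF u])
  have P0: "Phi u 0 0 = mat 1" and X0: "xp u 0 = 0" using Phi[OF u] xp[OF u] by auto
  have XT: "X \<tau> = X 0"
    using x0 unfolding X_def by (simp add: P0 X0 matrix_vector_mult_diff_rdistrib algebra_simps)
  note ps = per_sol[OF u tau per Xs XT]
  define Z where "Z t = X (t - of_int \<lfloor>t / \<tau>\<rfloor> * \<tau>)" for t
  have Zp: "is_periodic_solution A B C d u \<tau> Z" using ps(1) unfolding Z_def[abs_def] .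
  show ?thesis
  proof (rule ex1I[of _ Z])
    show "is_periodic_solution A B C d u \<tau> Z" by (rule Zp)
    fix y assume y: "is_periodic_solution A B C d u \<tau> y"
    have yz: "solfrom (*v) (Mm u) (gg u) 0 y" using y is_sol_solfrom unfolding is_periodic_solution_def by blast
    have "?L (y 0) = ?L x0" using per_init[OF u y tau] x0 by simp
    then have y0: "y 0 = x0" using \<open>inj ?L\<close> by (simp add: inj_eq)
    have yper: "y (t + \<tau>) = y t" for t using y unfolding is_periodic_solution_def by blast
    have Zper: "Z (t + \<tau>) = Z t" for t using Zp unfolding is_periodic_solution_def by blast
    show "y = Z"
    proof
      fix t
      obtain n :: nat where n: "- t < real n * \<tau>" using reals_Archimedean3[OF tau] by blast
      have tn: "0 \<le> t + real n * \<tau>" using n by simp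
      have "y t = y (t + real n * \<tau>)" by (rule per_iter[of y, OF yper, symmetric])
      also have "\<dots> = X (t + real n * \<tau>)" unfolding X_def using vec_repr[OF u yz tn] y0 by simp
      also have "\<dots> = Z (t + real n * \<tau>)" unfolding Z_def using ps(2)[OF tn] by simp
      also have "\<dots> = Z t" by (rule per_iter[of Z, OF Zper])
      finally show "y t = Z t" .
    qed
  qed
qed

end

(* ---- V ---- *)

context prob begin

context
  fixes u :: "real \<Rightarrow> real^'m" and \<tau> :: real
  assumes u: "adm u" and tau: "0 < \<tau>"
begin

abbreviation "KK \<equiv> Mb * Km"
abbreviation "Kw \<equiv> Mb * Kv"
definition "Bp = norm (mat 1 :: real^'n^'n) * exp (KK * \<tau>)"
definition "LP = KK * Bp"
definition "Bx = Gc * \<tau> * exp (Kw * \<tau>)"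
definition "Lx = Kw * Bx + Gc"

interpretation LM: lode "((**) :: real^'n^'n \<Rightarrow> real^'n^'n \<Rightarrow> real^'n^'n)" "Mm u" "\<lambda>_. 0" KK 0
  by (rule lodeM[OF u])
interpretation LV: lode "(*v)" "Mm u" "gg u" Kw Gc
  by (rule lodeV[OF u])

lemma PhiS: "solfrom ((**) :: real^'n^'n \<Rightarrow> real^'n^'n \<Rightarrow> real^'n^'n) (Mm u) (\<lambda>_. 0) s (Phi u s)" "Phi u s s = mat 1"
  using Phi[OF u] by auto

lemma Bp0: "0 \<le> Bp" unfolding Bp_def by simp
lemma LP0: "0 \<le> LP" unfolding LP_def using LM.K0 Bp0 by simp
lemma Gc0: "0 \<le> Gc" using LV.Gb0 .
lemma Bx0: "0 \<le> Bx" unfolding Bx_def using Gc0 tau by simp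
lemma Lx0: "0 \<le> Lx" unfolding Lx_def using Bx0 Gc0 LV.K0 by simp

lemma F1: assumes "0 \<le> s" "s \<le> r" "r \<le> \<tau>" shows "norm (Phi u s r) \<le> Bp"
proof -
  have "norm (Phi u s r) \<le> (norm (Phi u s s) + 0 * (r - s)) * exp (KK * (r - s))"
    by (rule LM.sol_bound[OF PhiS(1) assms(2)])
  also have "\<dots> \<le> Bp"
  proof -
    have "KK * (r - s) \<le> KK * \<tau>" using assms LM.K0 by (intro mult_left_mono) auto
    then show ?thesis unfolding Bp_def PhiS(2) by (simp add: mult_left_mono)
  qed
  finally show ?thesis .
qed

lemma F2: assumes "0 \<le> s" "s \<le> r" "r \<le> r'" "r' \<le> \<tau>" shows "norm (Phi u s r' - Phi u s r) \<le> LP * (r' - r)"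
proof -
  have "norm (Phi u s r' - Phi u s r) \<le> (KK * Bp + 0) * (r' - r)"
    by (rule LM.sol_lip[OF PhiS(1) assms(2,3)]) (use assms in \<open>auto intro!: F1\<close>)
  then show ?thesis by (simp add: LP_def)
qed

lemma F2': assumes "0 \<le> s" "s \<le> r" "r \<le> \<tau>" shows "norm (Phi u s r - mat 1) \<le> LP * (r - s)"
  using F2[OF assms(1) order_refl assms(2,3)] PhiS(2)[of s] by simp

lemma xpS: "solfrom (*v) (Mm u) (gg u) 0 (xp u)" "xp u 0 = 0" using xp[OF u] by auto

lemma F3: assumes "0 \<le> t" "t \<le> \<tau>" shows "norm (xp u t) \<le> Bx"
proof -
  have "norm (xp u t) \<le> (norm (xp u 0) + Gc * (t - 0)) * exp (Kw * (t - 0))"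
    by (rule LV.sol_bound[OF xpS(1) assms(1)])
  also have "\<dots> \<le> Bx" unfolding Bx_def xpS(2) using assms LV.K0 Gc0
    by (intro mult_mono) (auto intro: mult_left_mono)
  finally show ?thesis .
qed

lemma F4: assumes "0 \<le> t" "t \<le> t'" "t' \<le> \<tau>" shows "norm (xp u t' - xp u t) \<le> Lx * (t' - t)"
  unfolding Lx_def by (rule LV.sol_lip[OF xpS(1) assms(1,2)]) (use assms in \<open>auto intro!: F3\<close>)

lemma F5: assumes "0 \<le> s" "s \<le> s'" "s' \<le> T" "T \<le> \<tau>"
  shows "norm (Phi u s T - Phi u s' T) \<le> Bp * LP * Km * (s' - s)"
proof -
  have "Phi u s T - Phi u s' T = Phi u s' T ** Phi u s s' - Phi u s' T ** mat 1"
    using Phi_semi[OF u assms(2,3)] by simp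
  also have "\<dots> = Phi u s' T ** (Phi u s s' - mat 1)" by (simp add: matrix_add_ldistrib bounded_bilinear.diff_right[OF bb_mm])
  also have "norm \<dots> \<le> norm (Phi u s' T) * norm (Phi u s s' - mat 1) * Km" by (rule Km)
  also have "\<dots> \<le> Bp * (LP * (s' - s)) * Km"
    using F1[of s' T] F2'[of s s'] assms Km(1) Bp0
    by (intro mult_right_mono mult_mono) auto
  finally show ?thesis by (simp add: algebra_simps)
qed

lemma F6: assumes "0 \<le> T" "T \<le> \<tau>" shows "continuous_on {0..T} (\<lambda>s. Phi u s T)"
proof (rule lipschitz_on_continuous_on[of "Bp * LP * Km"], rule lipschitz_onI)
  show "0 \<le> Bp * LP * Km" using Bp0 LP0 Km(1) by simp
  fix x y assume xy: "x \<in> {0..T}" "y \<in> {0..T}"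
  show "dist (Phi u x T) (Phi u y T) \<le> Bp * LP * Km * dist x y"
  proof (cases "x \<le> y")
    case True
    then show ?thesis using F5[of x y T] xy assms by (simp add: dist_norm)
  next
    case False
    then show ?thesis using F5[of y x T] xy assms by (simp add: dist_norm dist_commute norm_minus_commute)
  qed
qed

lemma F7: assumes "0 \<le> a" "b \<le> T" "T \<le> \<tau>"
  shows "(\<lambda>s. Phi u s T *v gg u s) integrable_on {a..b}"
proof (cases "a \<le> b")
  case False then show ?thesis by (simp add: integrable_on_empty)
next
  case ab: True
  have T0: "0 \<le> T" using assms ab by simp
  note ce = clamp_ext[OF F6[OF T0 assms(3)] T0]
  let ?G = "\<lambda>s. Phi u (max 0 (min T s)) T"
  have "(\<lambda>s. ?G s *v gg u s) integrable_on {a..b}"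
  proof (rule integrable_bdd_borel)
    show "(\<lambda>s. ?G s *v gg u s) \<in> borel_measurable borel"
    proof (rule borel_measurable_continuous_Pair[where H="(*v)"])
      show "?G \<in> borel_measurable borel" using ce borel_measurable_continuous_onI by blast
      show "gg u \<in> borel_measurable borel" by (rule gg_meas[OF u])
      show "continuous_on UNIV (\<lambda>x::((real^'n^'n) \<times> (real^'n)). fst x *v snd x)"
        by (intro bounded_bilinear.continuous_on[OF bb_mv] continuous_intros)
    qed
    fix s assume "s \<in> {a..b}"
    have "norm (?G s *v gg u s) \<le> norm (?G s) * norm (gg u s) * Kv" by (rule Kv)
    also have "\<dots> \<le> Bp * Gc * Kv"
      using F1[of "max 0 (min T s)" T] assms T0 gg_bound[OF u, of s] Kv(1) Bp0
      by (intro mult_right_mono mult_mono) auto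
    finally show "norm (?G s *v gg u s) \<le> Bp * Gc * Kv" .
  qed
  then show ?thesis by (rule integrable_eq) (use assms in auto)
qed

definition "C1 = Kw * Lx + Kw * (LP * Bx * Kv) + LP * Gc * Kv"
definition "hh t = Phi u t \<tau> *v xp u t + integral {t..\<tau>} (\<lambda>s. Phi u s \<tau> *v gg u s)"

lemma C10: "0 \<le> C1" unfolding C1_def using LV.K0 Lx0 LP0 Bx0 Kv(1) Gc0 by simp

lemma F8: assumes t: "0 \<le> t" "t \<le> t'" "t' \<le> \<tau>"
  shows "norm (hh t' - hh t) \<le> Bp * Kv * C1 * (t' - t)^2"
proof -
  let ?G = "\<lambda>s. Phi u s \<tau> *v gg u s"
  let ?H = "\<lambda>s. Phi u s t' *v gg u s"
  define J where "J = integral {t..t'} ?H"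
  have iG: "?G integrable_on {t..\<tau>}" by (rule F7) (use t in auto)
  have iH: "?H integrable_on {t..t'}" by (rule F7) (use t in auto)
  have split: "integral {t..\<tau>} ?G = integral {t..t'} ?G + integral {t'..\<tau>} ?G"
    using t by (intro Henstock_Kurzweil_Integration.integral_combine[symmetric] iG) auto
  have GJ: "integral {t..t'} ?G = Phi u t' \<tau> *v J"
  proof -
    have "integral {t..t'} ?G = integral {t..t'} ((\<lambda>v. Phi u t' \<tau> *v v) \<circ> ?H)"
    proof (rule integral_cong)
      fix s assume "s \<in> {t..t'}"
      then have "Phi u s \<tau> = Phi u t' \<tau> ** Phi u s t'" using Phi_semi[OF u, of s t' \<tau>] t by auto
      then show "?G s = ((\<lambda>v. Phi u t' \<tau> *v v) \<circ> ?H) s" by (simp add: matrix_vector_mul_assoc)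
    qed
    also have "\<dots> = Phi u t' \<tau> *v J" unfolding J_def by (rule integral_linear[OF iH]) simp
    finally show ?thesis .
  qed
  have Pt: "Phi u t \<tau> = Phi u t' \<tau> ** Phi u t t'" using Phi_semi[OF u, of t t' \<tau>] t by auto
  define D where "D = xp u t' - Phi u t t' *v xp u t - J"
  have hdiff: "hh t' - hh t = Phi u t' \<tau> *v D"
    unfolding hh_def split GJ Pt D_def
    by (simp add: matrix_vector_mul_assoc[symmetric] matrix_vector_mult_diff_distrib algebra_simps)
  have ha: "((\<lambda>r. Mm u r *v xp u r + gg u r) has_integral (xp u t' - xp u t)) {t..t'}"
    using xpS(1) t unfolding solfrom_def by auto
  have hb0: "((\<lambda>r. Mm u r ** Phi u t r + 0) has_integral (Phi u t t' - Phi u t t)) {t..t'}"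
    using PhiS(1)[of t] t unfolding solfrom_def by auto
  have hb: "(((\<lambda>X. X *v xp u t) \<circ> (\<lambda>r. Mm u r ** Phi u t r + 0)) has_integral ((Phi u t t' - Phi u t t) *v xp u t)) {t..t'}"
    by (rule has_integral_linear[OF hb0]) (rule bounded_bilinear.bounded_linear_left[OF bb_mv])
  have hc: "(?H has_integral J) {t..t'}" unfolding J_def using iH by (simp add: integrable_integral)
  have hD: "((\<lambda>r. (Mm u r *v xp u r + gg u r) - ((\<lambda>X. X *v xp u t) \<circ> (\<lambda>r. Mm u r ** Phi u t r + 0)) r - ?H r)
      has_integral D) {t..t'}"
  proof -
    have "(xp u t' - xp u t) - (Phi u t t' - Phi u t t) *v xp u t - J = D"
      unfolding D_def PhiS(2) by (simp add: matrix_vector_mult_diff_rdistrib algebra_simps)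
    then show ?thesis using has_integral_diff[OF has_integral_diff[OF ha hb] hc] by simp
  qed
  have C1t: "0 \<le> C1 * (t' - t)" using C10 t by simp
  have bnd: "norm ((Mm u r *v xp u r + gg u r) - ((\<lambda>X. X *v xp u t) \<circ> (\<lambda>r. Mm u r ** Phi u t r + 0)) r - ?H r)
      \<le> C1 * (t' - t)" if r: "r \<in> {t..t'} - {}" for r
  proof -
    have rr: "t \<le> r" "r \<le> t'" using r by auto
    have eq: "(Mm u r *v xp u r + gg u r) - ((\<lambda>X. X *v xp u t) \<circ> (\<lambda>r. Mm u r ** Phi u t r + 0)) r - ?H r
      = Mm u r *v (xp u r - xp u t) + Mm u r *v ((mat 1 - Phi u t r) *v xp u t) - (Phi u r t' - mat 1) *v gg u r"
      by (simp add: matrix_vector_mul_assoc[symmetric] matrix_vector_mult_diff_distrib matrix_vector_mult_diff_rdistrib algebra_simps)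
    have n1: "norm (Mm u r *v (xp u r - xp u t)) \<le> Kw * (Lx * (t' - t))"
    proof -
      have "norm (Mm u r *v (xp u r - xp u t)) \<le> Kw * norm (xp u r - xp u t)" by (rule LV.Kb)
      also have "\<dots> \<le> Kw * (Lx * (r - t))" using F4[of t r] rr t LV.K0 by (intro mult_left_mono) auto
      also have "\<dots> \<le> Kw * (Lx * (t' - t))" using rr LV.K0 Lx0 by (intro mult_left_mono) auto
      finally show ?thesis .
    qed
    have n2: "norm (Mm u r *v ((mat 1 - Phi u t r) *v xp u t)) \<le> Kw * (LP * Bx * Kv * (t' - t))"
    proof -
      have "norm ((mat 1 - Phi u t r) *v xp u t) \<le> norm (mat 1 - Phi u t r) * norm (xp u t) * Kv" by (rule Kv)
      also have "\<dots> \<le> (LP * (t' - t)) * Bx * Kv"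
      proof (intro mult_right_mono mult_mono)
        have "norm (mat 1 - Phi u t r) = norm (Phi u t r - mat 1)" by (rule norm_minus_commute)
        also have "\<dots> \<le> LP * (r - t)" using F2'[of t r] rr t by simp
        also have "\<dots> \<le> LP * (t' - t)" using rr LP0 by (intro mult_left_mono) auto
        finally show "norm (mat 1 - Phi u t r) \<le> LP * (t' - t)" .
        show "norm (xp u t) \<le> Bx" using F3[of t] t by simp
      qed (use LP0 t Kv(1) in auto)
      finally have a: "norm ((mat 1 - Phi u t r) *v xp u t) \<le> LP * (t' - t) * Bx * Kv" .
      have "norm (Mm u r *v ((mat 1 - Phi u t r) *v xp u t)) \<le> Kw * norm ((mat 1 - Phi u t r) *v xp u t)" by (rule LV.Kb)
      also have "\<dots> \<le> Kw * (LP * (t' - t) * Bx * Kv)" using a LV.K0 by (rule mult_left_mono)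
      finally show ?thesis by (simp add: algebra_simps)
    qed
    have n3: "norm ((Phi u r t' - mat 1) *v gg u r) \<le> LP * Gc * Kv * (t' - t)"
    proof -
      have "norm ((Phi u r t' - mat 1) *v gg u r) \<le> norm (Phi u r t' - mat 1) * norm (gg u r) * Kv" by (rule Kv)
      also have "\<dots> \<le> (LP * (t' - t)) * Gc * Kv"
      proof (intro mult_right_mono mult_mono)
        have "norm (Phi u r t' - mat 1) \<le> LP * (t' - r)" using F2'[of r t'] rr t by simp
        also have "\<dots> \<le> LP * (t' - t)" using rr LP0 by (intro mult_left_mono) auto
        finally show "norm (Phi u r t' - mat 1) \<le> LP * (t' - t)" .
        show "norm (gg u r) \<le> Gc" by (rule gg_bound[OF u])
      qed (use LP0 t Kv(1) in auto)
      finally show ?thesis by (simp add: algebra_simps)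
    qed
    have "norm (Mm u r *v (xp u r - xp u t) + Mm u r *v ((mat 1 - Phi u t r) *v xp u t) - (Phi u r t' - mat 1) *v gg u r)
        \<le> norm (Mm u r *v (xp u r - xp u t)) + norm (Mm u r *v ((mat 1 - Phi u t r) *v xp u t)) + norm ((Phi u r t' - mat 1) *v gg u r)"
      by (meson norm_triangle_ineq norm_triangle_ineq4 add_mono order_trans order_refl)
    also have "\<dots> \<le> C1 * (t' - t)" using n1 n2 n3 unfolding C1_def by (simp add: algebra_simps)
    finally show ?thesis unfolding eq .
  qed
  have nD: "norm D \<le> C1 * (t' - t) * (t' - t)"
    using has_integral_bound_real[OF C1t finite.emptyI hD bnd] t by simp
  have "norm (hh t' - hh t) \<le> norm (Phi u t' \<tau>) * norm D * Kv" unfolding hdiff by (rule Kv)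
  also have "\<dots> \<le> Bp * (C1 * (t' - t) * (t' - t)) * Kv"
    using F1[of t' \<tau>] t nD Kv(1) Bp0 by (intro mult_right_mono mult_mono) auto
  finally show ?thesis by (simp add: power2_eq_square algebra_simps)
qed

lemma hh_const: "hh \<tau> = hh 0"
proof -
  define CH where "CH = Bp * Kv * C1"
  have CH0: "0 \<le> CH" unfolding CH_def using Bp0 Kv(1) C10 by simp
  have le: "norm (hh \<tau> - hh 0) \<le> CH * \<tau>^2 / real N" if N: "N \<ge> 1" for N :: nat
  proof -
    define t where "t i = real i * \<tau> / real N" for i
    have tN: "t N = \<tau>" "t 0 = 0" using N by (auto simp: t_def)
    have "hh \<tau> - hh 0 = (\<Sum>i<N. hh (t (Suc i)) - hh (t i))"
      by (subst sum_lessThan_telescope) (simp add: tN)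
    also have "norm \<dots> \<le> (\<Sum>i<N. norm (hh (t (Suc i)) - hh (t i)))" by (rule norm_sum)
    also have "\<dots> \<le> (\<Sum>i<N. CH * (\<tau> / real N)^2)"
    proof (rule sum_mono)
      fix i assume i: "i \<in> {..<N}"
      have d: "t (Suc i) - t i = \<tau> / real N" using N by (simp add: t_def field_simps)
      have i1: "real (Suc i) * \<tau> \<le> real N * \<tau>" using i tau by (intro mult_right_mono) auto
      have "0 \<le> t i" "t i \<le> t (Suc i)" using i N tau
        by (auto simp: t_def field_simps intro!: divide_nonneg_nonneg mult_right_mono)
      moreover have "t (Suc i) \<le> \<tau>" using i1 N unfolding t_def by (simp add: divide_le_eq mult.commute)
      ultimately have tt: "0 \<le> t i" "t i \<le> t (Suc i)" "t (Suc i) \<le> \<tau>" by auto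
      from F8[OF tt] show "norm (hh (t (Suc i)) - hh (t i)) \<le> CH * (\<tau> / real N)^2"
        unfolding d CH_def .
    qed
    also have "\<dots> = CH * \<tau>^2 / real N" using N by (simp add: power2_eq_square field_simps)
    finally show ?thesis .
  qed
  have "(\<lambda>N. CH * \<tau>^2 / real N) \<longlonglongrightarrow> 0" by (rule lim_const_over_n)
  then have "norm (hh \<tau> - hh 0) \<le> 0"
    by (rule LIMSEQ_le_const) (use le in \<open>auto intro!: exI[of _ 1]\<close>)
  then show ?thesis by simp
qed

lemma VC: "integral {0..\<tau>} (\<lambda>s. fundsol A B u \<tau> s *v (C *v u s + d)) = xp u \<tau>"
proof -
  have "integral {0..\<tau>} (\<lambda>s. fundsol A B u \<tau> s *v (C *v u s + d)) = integral {0..\<tau>} (\<lambda>s. Phi u s \<tau> *v gg u s)"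
    by (rule integral_cong) (simp add: fundsol_eq[OF u] gg_def)
  also have "\<dots> = hh 0" unfolding hh_def using xpS(2) by simp
  also have "\<dots> = hh \<tau>" by (rule hh_const[symmetric])
  also have "\<dots> = xp u \<tau>" unfolding hh_def PhiS(2) by simp
  finally show ?thesis .
qed

end
end

(* ---- LA ---- *)

lemma unit_lemma:
  fixes N :: "real^'n^'n"
  assumes e: "0 < \<epsilon>"
  shows "\<exists>\<eta>>0. \<forall>y. norm y = 1 \<longrightarrow> norm (N *v y) < \<eta> \<longrightarrow> infdist y {v. N *v v = 0} < \<epsilon>"
proof -
  let ?W = "{v. N *v v = 0}"
  let ?S = "sphere (0::real^'n) 1 \<inter> {y. \<epsilon> \<le> infdist y ?W}"
  have cS: "compact ?S"
  proof (rule compact_Int_closed[OF compact_sphere])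
    show "closed {y. \<epsilon> \<le> infdist y ?W}"
      by (intro closed_Collect_le continuous_on_const continuous_on_infdist continuous_on_id)
  qed
  have cW: "closed ?W"
  proof -
    have "subspace ?W" by (rule linear_subspace_kernel) simp
    then show ?thesis by (rule closed_subspace)
  qed
  have W0: "?W \<noteq> {}" by (auto intro: exI[of _ 0])
  show ?thesis
  proof (cases "?S = {}")
    case True
    show ?thesis
    proof (intro exI[of _ 1] conjI allI impI)
      fix y :: "real^'n" assume "norm y = 1"
      with True have "\<not> \<epsilon> \<le> infdist y ?W" by auto
      then show "infdist y ?W < \<epsilon>" by simp
    qed simp
  next
    case False
    have cf: "continuous_on ?S (\<lambda>y. norm (N *v y))"
      by (intro continuous_intros linear_continuous_on) simp
    obtain y0 where y0: "y0 \<in> ?S" and min: "\<And>y. y \<in> ?S \<Longrightarrow> norm (N *v y0) \<le> norm (N *v y)"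
      using continuous_attains_inf[OF cS False cf] by blast
    have "N *v y0 \<noteq> 0"
    proof
      assume "N *v y0 = 0"
      then have "y0 \<in> ?W" by simp
      then have "infdist y0 ?W = 0" using in_closed_iff_infdist_zero[OF cW W0] by blast
      with y0 e show False by simp
    qed
    then have pos: "0 < norm (N *v y0)" by simp
    show ?thesis
    proof (intro exI[of _ "norm (N *v y0)"] conjI allI impI pos)
      fix y :: "real^'n" assume y: "norm y = 1" "norm (N *v y) < norm (N *v y0)"
      show "infdist y ?W < \<epsilon>"
      proof (rule ccontr)
        assume "\<not> infdist y ?W < \<epsilon>"
        then have "y \<in> ?S" using y by auto
        from min[OF this] y(2) show False by simp
      qed
    qed
  qed
qed

lemma linalg:
  fixes Mk :: "nat \<Rightarrow> real^'n^'n" and bk :: "nat \<Rightarrow> real^'n" and x :: "nat \<Rightarrow> real^'n"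
  assumes Mk: "Mk \<longlonglongrightarrow> M0" and bk: "bk \<longlonglongrightarrow> b0"
    and eq: "\<And>k. k \<ge> 1 \<Longrightarrow> (mat 1 - Mk k) *v x k = bk k"
    and nr: "b0 \<notin> range (\<lambda>y. (mat 1 - M0) *v y)"
  shows "filterlim (\<lambda>k. norm (x k)) at_top sequentially
       \<and> (\<lambda>k. infdist (x k /\<^sub>R norm (x k)) {v. (mat 1 - M0) *v v = 0}) \<longlonglongrightarrow> 0"
proof -
  obtain Kv where Kv: "Kv > 0" "\<And>(a::real^'n^'n) (b::real^'n). norm (a *v b) \<le> norm a * norm b * Kv"
    using bounded_bilinear.pos_bounded[OF bb_mv] by blast
  let ?N = "mat 1 - M0"
  let ?V = "range (\<lambda>y. ?N *v y)"
  have cV: "closed ?V"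
  proof -
    have "subspace ?V" by (rule linear_subspace_image) (auto simp: subspace_UNIV)
    then show ?thesis by (rule closed_subspace)
  qed
  have "infdist b0 ?V \<noteq> 0" using nr in_closed_iff_infdist_zero[OF cV] by blast
  then have d: "0 < infdist b0 ?V" using infdist_nonneg[of b0 ?V] by linarith
  define \<delta> where "\<delta> = infdist b0 ?V"
  have key: "?N *v x k - b0 = (Mk k - M0) *v x k + (bk k - b0)" if "k \<ge> 1" for k
    using eq[OF that] by (simp add: matrix_vector_mult_diff_rdistrib algebra_simps)
  have dM: "(\<lambda>k. norm (Mk k - M0)) \<longlonglongrightarrow> 0" using Mk by (simp add: tendsto_norm_zero_iff LIM_zero)
  have db: "(\<lambda>k. norm (bk k - b0)) \<longlonglongrightarrow> 0" using bk by (simp add: tendsto_norm_zero_iff LIM_zero)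
  have inf: "filterlim (\<lambda>k. norm (x k)) at_top sequentially"
    unfolding filterlim_at_top
  proof
    fix R :: real
    define R' where "R' = max R 0"
    have "(\<lambda>k. norm (Mk k - M0) * R' * Kv + norm (bk k - b0)) \<longlonglongrightarrow> 0 * R' * Kv + 0"
      by (intro tendsto_intros dM db)
    then have "\<forall>\<^sub>F k in sequentially. norm (Mk k - M0) * R' * Kv + norm (bk k - b0) < \<delta>"
      using d unfolding \<delta>_def by (intro order_tendstoD(2)) auto
    moreover have "\<forall>\<^sub>F k in sequentially. k \<ge> 1" by (rule eventually_ge_at_top)
    ultimately show "\<forall>\<^sub>F k in sequentially. R \<le> norm (x k)"
    proof eventually_elim
      case (elim k)
      show ?case
      proof (rule ccontr)
        assume "\<not> R \<le> norm (x k)"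
        then have xR: "norm (x k) \<le> R'" unfolding R'_def by simp
        have "\<delta> \<le> dist b0 (?N *v x k)" unfolding \<delta>_def by (rule infdist_le) auto
        also have "\<dots> = norm ((Mk k - M0) *v x k + (bk k - b0))"
          by (metis dist_commute dist_norm key[OF elim(2)])
        also have "\<dots> \<le> norm ((Mk k - M0) *v x k) + norm (bk k - b0)" by (rule norm_triangle_ineq)
        also have "norm ((Mk k - M0) *v x k) \<le> norm (Mk k - M0) * norm (x k) * Kv" by (rule Kv)
        also have "\<dots> \<le> norm (Mk k - M0) * R' * Kv" using xR Kv(1) by (intro mult_right_mono mult_left_mono) auto
        finally show False using elim(1) by simp
      qed
    qed
  qed
  have lim2: "(\<lambda>k. infdist (x k /\<^sub>R norm (x k)) {v. ?N *v v = 0}) \<longlonglongrightarrow> 0"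
  proof (rule LIMSEQ_I)
    fix \<epsilon> :: real assume e: "0 < \<epsilon>"
    obtain \<eta> where eta: "\<eta> > 0" "\<And>y. norm y = 1 \<Longrightarrow> norm (?N *v y) < \<eta> \<Longrightarrow> infdist y {v. ?N *v v = 0} < \<epsilon>"
      using unit_lemma[OF e, of ?N] by blast
    have "(\<lambda>k. norm (bk k) * inverse (norm (x k)) + norm (Mk k - M0) * Kv) \<longlonglongrightarrow> norm b0 * 0 + 0 * Kv"
      by (intro tendsto_intros bk dM tendsto_inverse_0_at_top inf)
    then have ev1: "\<forall>\<^sub>F k in sequentially. norm (bk k) * inverse (norm (x k)) + norm (Mk k - M0) * Kv < \<eta>"
      using eta(1) by (intro order_tendstoD(2)) auto
    have ev2: "\<forall>\<^sub>F k in sequentially. 1 \<le> norm (x k)" using inf unfolding filterlim_at_top by blast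
    have ev3: "\<forall>\<^sub>F k in sequentially. k \<ge> 1" by (rule eventually_ge_at_top)
    from ev1 ev2 ev3 have "\<forall>\<^sub>F k in sequentially. norm (infdist (x k /\<^sub>R norm (x k)) {v. ?N *v v = 0} - 0) < \<epsilon>"
    proof eventually_elim
      case (elim k)
      define y where "y = x k /\<^sub>R norm (x k)"
      have nx: "norm (x k) > 0" using elim(2) by linarith
      have ny: "norm y = 1" unfolding y_def using nx by simp
      have "?N *v y = (mat 1 - Mk k) *v y + (Mk k - M0) *v y"
        by (simp add: matrix_vector_mult_diff_rdistrib algebra_simps)
      also have "(mat 1 - Mk k) *v y = bk k /\<^sub>R norm (x k)"
        unfolding y_def using eq[OF elim(3)] by (simp add: matrix_vector_mult_scaleR)
      finally have "norm (?N *v y) \<le> norm (bk k /\<^sub>R norm (x k)) + norm ((Mk k - M0) *v y)"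
        by (metis norm_triangle_ineq)
      also have "norm ((Mk k - M0) *v y) \<le> norm (Mk k - M0) * norm y * Kv" by (rule Kv)
      also have "norm (bk k /\<^sub>R norm (x k)) = norm (bk k) * inverse (norm (x k))"
        using nx by (simp add: divide_inverse_commute)
      finally have "norm (?N *v y) < \<eta>" using elim(1) ny by simp
      from eta(2)[OF ny this] have "infdist y {v. ?N *v v = 0} < \<epsilon>" .
      then show ?case unfolding y_def using infdist_nonneg[of "x k /\<^sub>R norm (x k)" "{v. ?N *v v = 0}"] by simp
    qed
    then show "\<exists>no. \<forall>k\<ge>no. norm (infdist (x k /\<^sub>R norm (x k)) {v. ?N *v v = 0} - 0) < \<epsilon>"
      by (simp add: eventually_sequentially)
  qed
  show ?thesis using inf lim2 by simp
qed


(* ---- F ---- *)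

lemma int_squeeze:
  fixes f g :: "nat \<Rightarrow> real \<Rightarrow> real"
  assumes fi: "\<And>k. f k integrable_on S" and gi: "\<And>k. g k integrable_on S"
    and f0: "\<And>k r. r \<in> S \<Longrightarrow> 0 \<le> f k r" and fg: "\<And>k r. r \<in> S \<Longrightarrow> f k r \<le> L * g k r"
    and g0: "(\<lambda>k. integral S (g k)) \<longlonglongrightarrow> 0"
  shows "(\<lambda>k. integral S (f k)) \<longlonglongrightarrow> 0"
proof (rule tendsto_sandwich[of "\<lambda>_. 0" _ _ "\<lambda>k. L * integral S (g k)"])
  show "\<forall>\<^sub>F k in sequentially. 0 \<le> integral S (f k)"
    using fi f0 by (auto intro!: always_eventually integral_nonneg)
  have "integral S (f k) \<le> L * integral S (g k)" for k
  proof -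
    have "integral S (f k) \<le> integral S (\<lambda>r. L * g k r)"
      by (rule integral_le[OF fi int_cmult[OF gi] fg])
    also have "\<dots> = L * integral S (g k)" by simp
    finally show ?thesis .
  qed
  then show "\<forall>\<^sub>F k in sequentially. integral S (f k) \<le> L * integral S (g k)" by simp
  show "(\<lambda>k. L * integral S (g k)) \<longlonglongrightarrow> 0" using tendsto_mult_right_zero[OF g0] by simp
qed simp

context prob begin

lemma meas_norm_diff:
  fixes f g :: "real \<Rightarrow> 'b::euclidean_space"
  assumes "f \<in> borel_measurable borel" "g \<in> borel_measurable borel"
  shows "(\<lambda>r. norm (f r - g r)) \<in> borel_measurable borel"
  using assms by measurable

lemma Mm_diff_int: "adm u \<Longrightarrow> adm v \<Longrightarrow> (\<lambda>r. norm (Mm u r - Mm v r)) integrable_on {a..b}"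
proof (rule integrable_bdd_borel[where B="Mb + Mb"])
  assume u: "adm u" and v: "adm v"
  show "(\<lambda>r. norm (Mm u r - Mm v r)) \<in> borel_measurable borel"
    by (intro meas_norm_diff Mm_meas u v)
  fix r show "norm (norm (Mm u r - Mm v r)) \<le> Mb + Mb"
    using norm_triangle_ineq4[of "Mm u r" "Mm v r"] Mm_bound[OF u, of r] Mm_bound[OF v, of r] by simp
qed

lemma gg_diff_int: "adm u \<Longrightarrow> adm v \<Longrightarrow> (\<lambda>r. norm (gg u r - gg v r)) integrable_on {a..b}"
proof (rule integrable_bdd_borel[where B="Gc + Gc"])
  assume u: "adm u" and v: "adm v"
  show "(\<lambda>r. norm (gg u r - gg v r)) \<in> borel_measurable borel"
    by (intro meas_norm_diff gg_meas u v)
  fix r show "norm (norm (gg u r - gg v r)) \<le> Gc + Gc"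
    using norm_triangle_ineq4[of "gg u r" "gg v r"] gg_bound[OF u, of r] gg_bound[OF v, of r] by simp
qed

lemma u_diff_int: "adm u \<Longrightarrow> adm v \<Longrightarrow> (\<lambda>r. norm (u r - v r)) integrable_on {a..b}"
proof (rule integrable_bdd_borel[where B="c + c"])
  assume u: "adm u" and v: "adm v"
  show "(\<lambda>r. norm (u r - v r)) \<in> borel_measurable borel"
    using u v unfolding adm_def by (intro meas_norm_diff) auto
  fix r show "norm (norm (u r - v r)) \<le> c + c"
    using norm_triangle_ineq4[of "u r" "v r"] u v unfolding adm_def by (smt (verit) norm_ge_zero real_norm_def)
qed

end

theorem lemma3p8:
  fixes A :: "real^'n^'n" and B :: "'m::finite \<Rightarrow> real^'n^'n"
    and C :: "real^'m^'n" and d :: "real^'n" and \<Omega> :: "(real^'m) set"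
    and u :: "nat \<Rightarrow> real \<Rightarrow> real^'m" and \<tau> :: "nat \<Rightarrow> real" and c :: real
  assumes \<Omega>_bdd: "bounded \<Omega>"
    and u_meas: "\<And>k. u k \<in> borel_measurable borel"
    and u_val: "\<And>k t. u k t \<in> \<Omega>"
    and \<tau>_pos: "\<And>k. \<tau> k > 0"
    and u_per: "\<And>k t. u k (t + \<tau> k) = u k t"
    and \<tau>_lim: "\<tau> \<longlonglongrightarrow> \<tau> 0"
    and u_L1: "(\<lambda>k. integral {0..\<tau> 0 + 1} (\<lambda>t. norm (u k t - u 0 t))) \<longlonglongrightarrow> 0"
    and c_pos: "c > 0"
    and u_bdd: "\<And>k t. norm (u k t) \<le> c"
    and spec0: "one_in_spec (fundsol A B (u 0) (\<tau> 0) 0)"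
    and speck: "\<And>k. k \<ge> 1 \<Longrightarrow> \<not> one_in_spec (fundsol A B (u k) (\<tau> k) 0)"
    and nonres: "integral {0..\<tau> 0} (\<lambda>s. fundsol A B (u 0) (\<tau> 0) s *v (C *v u 0 s + d))
                   \<notin> range (\<lambda>y. (mat 1 - fundsol A B (u 0) (\<tau> 0) 0) *v y)"
  shows "(\<forall>k\<ge>1. \<exists>!x. is_periodic_solution A B C d (u k) (\<tau> k) x)
       \<and> (\<forall>xs :: nat \<Rightarrow> real \<Rightarrow> real^'n.
            (\<forall>k\<ge>1. is_periodic_solution A B C d (u k) (\<tau> k) (xs k)) \<longrightarrow>
              filterlim (\<lambda>k. norm (xs k 0)) at_top sequentially
            \<and> (\<lambda>k. infdist (xs k 0 /\<^sub>R norm (xs k 0))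
                     {v. (mat 1 - fundsol A B (u 0) (\<tau> 0) 0) *v v = 0}) \<longlonglongrightarrow> 0)
       \<and> {v. (mat 1 - fundsol A B (u 0) (\<tau> 0) 0) *v v = 0}
           = eigenspace_real (fundsol A B (u 0) (\<tau> 0) 0) 1"
proof -
  interpret P: prob A B C d c using c_pos by unfold_locales simp
  have adm: "P.adm (u k)" for k unfolding P.adm_def using u_meas u_bdd by auto
  have fk: "fundsol A B (u k) (\<tau> k) 0 = P.Phi (u k) 0 (\<tau> k)" for k
    using P.fundsol_eq[OF adm, of 0 "\<tau> k"] \<tau>_pos[of k] by simp
  have part1: "\<forall>k\<ge>1. \<exists>!x. is_periodic_solution A B C d (u k) (\<tau> k) x"
    using P.per_exists_unique[OF adm \<tau>_pos u_per] speck fk by auto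
  define T where "T = \<tau> 0 + 1"
  have T0: "0 \<le> \<tau> 0" "\<tau> 0 < T" using \<tau>_pos[of 0] by (auto simp: T_def)
  have tk: "0 \<le> \<tau> k" for k using \<tau>_pos[of k] by simp
  have uL1: "(\<lambda>k. integral {0..T} (\<lambda>r. norm (u k r - u 0 r))) \<longlonglongrightarrow> 0" using u_L1 by (simp add: T_def)
  have uint: "(\<lambda>r. norm (u k r - u 0 r)) integrable_on {0..T}" for k by (rule P.u_diff_int[OF adm adm])
  have LM: "lode ((**) :: real^'n^'n \<Rightarrow> real^'n^'n \<Rightarrow> real^'n^'n) (P.Mm (u k)) (\<lambda>_. 0) (P.Mb * P.Km) 0" for k
    by (rule P.lodeM[OF adm])
  have LV: "lode (*v) (P.Mm (u k)) (P.gg (u k)) (P.Mb * P.Kv) P.Gc" for k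
    by (rule P.lodeV[OF adm])
  have XM: "solfrom ((**) :: real^'n^'n \<Rightarrow> real^'n^'n \<Rightarrow> real^'n^'n) (P.Mm (u k)) (\<lambda>_. 0) 0 (P.Phi (u k) 0)" for k
    using P.Phi[OF adm] by blast
  have XV: "solfrom (*v) (P.Mm (u k)) (P.gg (u k)) 0 (P.xp (u k))" for k
    using P.xp[OF adm] by blast
  have initM: "P.Phi (u k) 0 0 = P.Phi (u 0) 0 0" for k using P.Phi[OF adm] by simp
  have initV: "P.xp (u k) 0 = P.xp (u 0) 0" for k using P.xp[OF adm] by simp
  have dM: "(\<lambda>k. integral {0..T} (\<lambda>r. norm (P.Mm (u k) r - P.Mm (u 0) r))) \<longlonglongrightarrow> 0"
  proof (rule int_squeeze[OF _ uint _ _ uL1])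
    show "(\<lambda>r. norm (P.Mm (u k) r - P.Mm (u 0) r)) integrable_on {0..T}" for k by (rule P.Mm_diff_int[OF adm adm])
    show "0 \<le> norm (P.Mm (u k) r - P.Mm (u 0) r)" for k r by simp
    show "norm (P.Mm (u k) r - P.Mm (u 0) r) \<le> (\<Sum>i\<in>UNIV. norm (B i)) * norm (u k r - u 0 r)" for k r
      unfolding P.Mm_def using Amat_diff[of A B "u k r" "u 0 r"] by (simp add: mult.commute)
  qed
  have dMi: "(\<lambda>r. norm (P.Mm (u k) r - P.Mm (u 0) r)) integrable_on {0..T}" for k by (rule P.Mm_diff_int[OF adm adm])
  have dg: "(\<lambda>k. integral {0..T} (\<lambda>r. norm (P.gg (u k) r - P.gg (u 0) r))) \<longlonglongrightarrow> 0"
  proof (rule int_squeeze[OF _ uint _ _ uL1])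
    show "(\<lambda>r. norm (P.gg (u k) r - P.gg (u 0) r)) integrable_on {0..T}" for k by (rule P.gg_diff_int[OF adm adm])
    show "0 \<le> norm (P.gg (u k) r - P.gg (u 0) r)" for k r by simp
    show "norm (P.gg (u k) r - P.gg (u 0) r) \<le> onorm ((*v) C) * norm (u k r - u 0 r)" for k r
      unfolding P.gg_def using P.onormC[of "u k r - u 0 r"] by (simp add: matrix_vector_mult_diff_distrib)
  qed
  have dgi: "(\<lambda>r. norm (P.gg (u k) r - P.gg (u 0) r)) integrable_on {0..T}" for k by (rule P.gg_diff_int[OF adm adm])
  have z1: "(\<lambda>k. integral {0..T} (\<lambda>r. norm ((\<lambda>_. 0::real^'n^'n) r - (\<lambda>_. 0) r))) \<longlonglongrightarrow> 0" by simp
  have z2: "(\<lambda>r. norm ((\<lambda>_. 0::real^'n^'n) r - (\<lambda>_. 0) r)) integrable_on {0..T}" by (simp add: integrable_0)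
  have Mconv: "(\<lambda>k. P.Phi (u k) 0 (\<tau> k)) \<longlonglongrightarrow> P.Phi (u 0) 0 (\<tau> 0)"
    by (rule cont_dep[OF LM LM XM XM initM dM dMi z1 z2 \<tau>_lim T0 tk])
  have bconv: "(\<lambda>k. P.xp (u k) (\<tau> k)) \<longlonglongrightarrow> P.xp (u 0) (\<tau> 0)"
    by (rule cont_dep[OF LV LV XV XV initV dM dMi dg dgi \<tau>_lim T0 tk])
  have VC: "integral {0..\<tau> 0} (\<lambda>s. fundsol A B (u 0) (\<tau> 0) s *v (C *v u 0 s + d)) = P.xp (u 0) (\<tau> 0)"
    by (rule P.VC[OF adm \<tau>_pos])
  have nr: "P.xp (u 0) (\<tau> 0) \<notin> range (\<lambda>y. (mat 1 - P.Phi (u 0) 0 (\<tau> 0)) *v y)"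
    using nonres unfolding VC fk .
  have part2: "filterlim (\<lambda>k. norm (xs k 0)) at_top sequentially
            \<and> (\<lambda>k. infdist (xs k 0 /\<^sub>R norm (xs k 0))
                     {v. (mat 1 - fundsol A B (u 0) (\<tau> 0) 0) *v v = 0}) \<longlonglongrightarrow> 0"
    if xs: "\<forall>k\<ge>1. is_periodic_solution A B C d (u k) (\<tau> k) (xs k)" for xs :: "nat \<Rightarrow> real \<Rightarrow> real^'n"
  proof -
    have eq: "(mat 1 - P.Phi (u k) 0 (\<tau> k)) *v xs k 0 = P.xp (u k) (\<tau> k)" if "k \<ge> 1" for k
      using P.per_init[OF adm _ \<tau>_pos] xs that by blast
    show ?thesis unfolding fk by (rule linalg[OF Mconv bconv eq nr])
  qed
  have part3: "{v. (mat 1 - fundsol A B (u 0) (\<tau> 0) 0) *v v = 0} = eigenspace_real (fundsol A B (u 0) (\<tau> 0) 0) 1"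
    unfolding eigenspace_real_def by (auto simp: matrix_vector_mult_diff_rdistrib)
  show ?thesis using part1 part2 part3 by blast
qed


end
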